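(* There is a functor $\mathrm{Coll}:\mathbf{OpCat}\to\mathbf{SkewMonCat}$ sending an operadic category $\mathcal C$ to the skew monoidal category $\mathrm{Coll}_{\mathcal C}(\mathbf{Set})$. Moreover, an operadic category $\mathcal C$ is a genuine operadic category if and only if the left unit constraint $\lambda$ of $\mathrm{Coll}_{\mathcal C}(\mathbf{Set})$ is invertible.
   Context: Operadic categories: $\mathcal S$ is a skeleton of finite sets (objects $\mathbb N$), with fixed equivalences $R_I:\mathcal S/I\to\mathcal S^I$ sending $f:J\to I$ to its fibres. An operadic category is a category $\mathcal C$ with a functor $|\cdot|:\mathcal C\to\mathcal S$ and functors $R_c:\mathcal C/c\to\mathcal C^{|c|}$ with $|\cdot|^{|c|}\circ R_c=R_{|c|}\circ(|\cdot|/c)$; the fibre $\psi^{-1}i$ of $\psi:c\to d$ at $i\in|d|$ is the $i$-th component of $R_d(\psi)$; for $\varphi:b\to c,\psi:c\to d$, $\varphi^\psi=R_d(\varphi:\psi\varphi\to\psi)$ with components $\varphi^\psi_j:(\psi\varphi)^{-1}j\to\psi^{-1}j$; $u$ is trivial if $|u|=1$ and $R_u=\mathrm{dom}$. Axioms: fibres of identities are trivial; double slice condition: for $\psi:c\to d$, $R_c\circ(\mathrm{dom}/\psi)=(\cong)\circ(\prod_jR_{\psi^{-1}j})\circ(R_d/\psi)$ as functors $(\mathcal C/d)/\psi\to\mathcal C^{|c|}$, via $\mathcal C^{|d|}/R_d\psi\cong\prod_j\mathcal C/\psi^{-1}j$ and $|c|\cong\sum_j|\psi|^{-1}j$. A strict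 operadic functor $F:\mathcal C\to\mathcal D$ is a functor with $|F(-)|=|-|$ and $R_{Fc}\circ(F/c)=F^{|c|}\circ R_c$ for all $c$. $\mathbf{OpCat}$ is the category of operadic categories and strict operadic functors. An operadic category is genuine if each connected component contains exactly one trivial object and that object is terminal in the component. $\mathrm{Coll}_{\mathcal C}(\mathbf{Set})$: with $C$ the object set of $\mathcal C$, the underlying category is $\mathbf{Set}/C$ (objects $\partial:X\to C$, $X_c=\partial^{-1}c$); $(X*Y)_c=\sum_{\varphi:c\to d}X_d\times\prod_{i\in|d|}Y_{\varphi^{-1}i}$ (elements $(x,\varphi,y)$); unit $U$ = set of trivial objects; $\alpha(x,\psi,y,\varphi,z)=(x,\psi\varphi,y,\varphi^\psi,z)$, $\lambda(u,\varphi,x)=x$, $\rho(x)=(x,1_{\partial x},(1_{\partial x}^{-1}i)_i)$. This is a skew monoidal category: a category with tensor $*$, unit $U$, and natural maps $\alpha:(X*Y)*Z\to X*(Y*Z)$, $\lambda:U*X\to X$, $\rho:X\to X*U$ (not necessarily invertible) satisfying the five coherence axioms $\lambda_U\rho_U=1$, $\lambda\alpha=\lambda*1$, $\alpha\rho=1*\rho$, $(1*\lambda)\alpha(\rho*1)=1$, and the pentagon. $\mathbf{SkewMonCat}$ has skew monoidal categories as objects and opmonoidal functors as morphisms: an opmonoidal functor $(\mathcal E,*,U)\to(\mathcal F,*,V)$ is a functor $F$ with natural $F^2:F(X*Y)\to FX*FY$ and $F^0:FU\to V$ such that $\alpha\circ(F^2*1)\circ F^2=(1*F^2)\circ F^2\circ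 F\alpha$, $\lambda\circ(F^0*1)\circ F^2=F\lambda$, and $(1*F^0)\circ F^2\circ F\rho=\rho$. *)

theory Defs
  imports Main
begin

section \<open>The skeleton S of finite sets\<close>

text \<open>An object n of S is the set {0..<n}; a morphism m -> n is a function
  defined on {0..<m} with values in {0..<n}.  The fixed equivalence
  R_I : S/I -> S^I sends f : J -> I to the family of its fibres, each fibre
  identified with an object of S by the order-preserving enumeration.\<close>

definition sfib_elem :: "(nat \<Rightarrow> nat) \<Rightarrow> nat \<Rightarrow> nat \<Rightarrow> nat \<Rightarrow> nat" where
  "sfib_elem f m i r = sorted_list_of_set {k. k < m \<and> f k = i} ! r"

definition srank :: "(nat \<Rightarrow> nat) \<Rightarrow> nat \<Rightarrow> nat" where
  "srank f k = card {k'. k' < k \<and> f k' = f k}"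

record ('o, 'm) opcat =
  Obj  :: "'o set"
  Arr  :: "'m set"
  Dom  :: "'m \<Rightarrow> 'o"
  Cod  :: "'m \<Rightarrow> 'o"
  Idt  :: "'o \<Rightarrow> 'm"
  Comp :: "'m \<Rightarrow> 'm \<Rightarrow> 'm"          (* Comp g f = g \<circ> f *)
  Card :: "'o \<Rightarrow> nat"
  Fmap :: "'m \<Rightarrow> nat \<Rightarrow> nat"
  Fib  :: "'m \<Rightarrow> nat \<Rightarrow> 'o"            (* Fib psi i = psi^{-1} i *)
  Fibm :: "'m \<Rightarrow> 'm \<Rightarrow> nat \<Rightarrow> 'm"      (* Fibm phi psi j = phi^psi_j *)

definition is_category :: "('o, 'm) opcat \<Rightarrow> bool" where
  "is_category C \<longleftrightarrow>
     (\<forall>f\<in>Arr C. Dom C f \<in> Obj C \<and> Cod C f \<in> Obj C) \<and>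
     (\<forall>c\<in>Obj C. Idt C c \<in> Arr C \<and> Dom C (Idt C c) = c \<and> Cod C (Idt C c) = c) \<and>
     (\<forall>f\<in>Arr C. \<forall>g\<in>Arr C. Cod C f = Dom C g \<longrightarrow>
        Comp C g f \<in> Arr C \<and> Dom C (Comp C g f) = Dom C f \<and> Cod C (Comp C g f) = Cod C g) \<and>
     (\<forall>f\<in>Arr C. Comp C (Idt C (Cod C f)) f = f \<and> Comp C f (Idt C (Dom C f)) = f) \<and>
     (\<forall>f\<in>Arr C. \<forall>g\<in>Arr C. \<forall>h\<in>Arr C. Cod C f = Dom C g \<and> Cod C g = Dom C h \<longrightarrow>
        Comp C h (Comp C g f) = Comp C (Comp C h g) f)"

definition card_functor :: "('o, 'm) opcat \<Rightarrow> bool" where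
  "card_functor C \<longleftrightarrow>
     (\<forall>f\<in>Arr C. \<forall>k < Card C (Dom C f). Fmap C f k < Card C (Cod C f)) \<and>
     (\<forall>c\<in>Obj C. \<forall>k < Card C c. Fmap C (Idt C c) k = k) \<and>
     (\<forall>f\<in>Arr C. \<forall>g\<in>Arr C. Cod C f = Dom C g \<longrightarrow>
        (\<forall>k < Card C (Dom C f). Fmap C (Comp C g f) k = Fmap C g (Fmap C f k)))"

text \<open>The functors R_c : C/c -> C^{|c|}.  An object of C/c is f : a -> c, it is
  sent to the family (Fib f i)_i; a morphism h : (g h) -> g of C/c is sent to
  the family (Fibm h g i)_i.\<close>
definition fibre_functors :: "('o, 'm) opcat \<Rightarrow> bool" where
  "fibre_functors C \<longleftrightarrow>
     (\<forall>f\<in>Arr C. \<forall>i < Card C (Cod C f). Fib C f i \<in> Obj C) \<and>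
     (\<forall>h\<in>Arr C. \<forall>g\<in>Arr C. Cod C h = Dom C g \<longrightarrow> (\<forall>i < Card C (Cod C g).
        Fibm C h g i \<in> Arr C \<and> Dom C (Fibm C h g i) = Fib C (Comp C g h) i \<and>
        Cod C (Fibm C h g i) = Fib C g i)) \<and>
     (\<forall>g\<in>Arr C. \<forall>i < Card C (Cod C g). Fibm C (Idt C (Dom C g)) g i = Idt C (Fib C g i)) \<and>
     (\<forall>h\<in>Arr C. \<forall>h'\<in>Arr C. \<forall>g\<in>Arr C. Cod C h = Dom C h' \<and> Cod C h' = Dom C g \<longrightarrow>
        (\<forall>i < Card C (Cod C g).
           Fibm C (Comp C h' h) g i = Comp C (Fibm C h' g i) (Fibm C h (Comp C g h') i)))"

text \<open>Compatibility |-|^{|c|} o R_c = R_{|c|} o (|-|/c).\<close>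
definition card_compat :: "('o, 'm) opcat \<Rightarrow> bool" where
  "card_compat C \<longleftrightarrow>
     (\<forall>f\<in>Arr C. \<forall>i < Card C (Cod C f).
        Card C (Fib C f i) = card {k. k < Card C (Dom C f) \<and> Fmap C f k = i}) \<and>
     (\<forall>h\<in>Arr C. \<forall>g\<in>Arr C. Cod C h = Dom C g \<longrightarrow> (\<forall>i < Card C (Cod C g).
        \<forall>r < Card C (Fib C (Comp C g h) i).
          Fmap C (Fibm C h g i) r =
            srank (Fmap C g) (Fmap C h (sfib_elem (Fmap C (Comp C g h)) (Card C (Dom C h)) i r))))"

text \<open>Trivial objects: |u| = 1 and R_u = dom.\<close>
definition trivial :: "('o, 'm) opcat \<Rightarrow> 'o \<Rightarrow> bool" where
  "trivial C u \<longleftrightarrow> u \<in> Obj C \<and> Card C u = 1 \<and>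
     (\<forall>f\<in>Arr C. Cod C f = u \<longrightarrow> Fib C f 0 = Dom C f) \<and>
     (\<forall>h\<in>Arr C. \<forall>g\<in>Arr C. Cod C h = Dom C g \<and> Cod C g = u \<longrightarrow> Fibm C h g 0 = h)"

text \<open>Double slice condition, on objects and on morphisms of (C/d)/psi; the
  index k of |c| corresponds to the pair (|psi| k, position of k in its fibre).\<close>
definition double_slice :: "('o, 'm) opcat \<Rightarrow> bool" where
  "double_slice C \<longleftrightarrow>
     (\<forall>\<phi>\<in>Arr C. \<forall>\<psi>\<in>Arr C. Cod C \<phi> = Dom C \<psi> \<longrightarrow> (\<forall>k < Card C (Cod C \<phi>).
        Fib C \<phi> k = Fib C (Fibm C \<phi> \<psi> (Fmap C \<psi> k)) (srank (Fmap C \<psi>) k))) \<and>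
     (\<forall>h\<in>Arr C. \<forall>\<phi>\<in>Arr C. \<forall>\<psi>\<in>Arr C. Cod C h = Dom C \<phi> \<and> Cod C \<phi> = Dom C \<psi> \<longrightarrow>
        (\<forall>k < Card C (Cod C \<phi>).
          Fibm C h \<phi> k =
            Fibm C (Fibm C h (Comp C \<psi> \<phi>) (Fmap C \<psi> k)) (Fibm C \<phi> \<psi> (Fmap C \<psi> k))
                   (srank (Fmap C \<psi>) k)))"

definition opcat :: "('o, 'm) opcat \<Rightarrow> bool" where
  "opcat C \<longleftrightarrow> is_category C \<and> card_functor C \<and> fibre_functors C \<and> card_compat C \<and>
     (\<forall>c\<in>Obj C. \<forall>i < Card C c. trivial C (Fib C (Idt C c) i)) \<and>
     double_slice C"

definition strict_opfunctor ::
  "('o, 'm) opcat \<Rightarrow> ('o2, 'm2) opcat \<Rightarrow> ('o \<Rightarrow> 'o2) \<times> ('m \<Rightarrow> 'm2) \<Rightarrow> bool" where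
  "strict_opfunctor C D F \<longleftrightarrow>
     (\<forall>c\<in>Obj C. fst F c \<in> Obj D) \<and> (\<forall>f\<in>Arr C. snd F f \<in> Arr D) \<and>
     (\<forall>f\<in>Arr C. Dom D (snd F f) = fst F (Dom C f) \<and> Cod D (snd F f) = fst F (Cod C f)) \<and>
     (\<forall>c\<in>Obj C. snd F (Idt C c) = Idt D (fst F c)) \<and>
     (\<forall>f\<in>Arr C. \<forall>g\<in>Arr C. Cod C f = Dom C g \<longrightarrow> snd F (Comp C g f) = Comp D (snd F g) (snd F f)) \<and>
     (\<forall>c\<in>Obj C. Card D (fst F c) = Card C c) \<and>
     (\<forall>f\<in>Arr C. \<forall>k < Card C (Dom C f). Fmap D (snd F f) k = Fmap C f k) \<and>
     (\<forall>f\<in>Arr C. \<forall>i < Card C (Cod C f). Fib D (snd F f) i = fst F (Fib C f i)) \<and>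
     (\<forall>h\<in>Arr C. \<forall>g\<in>Arr C. Cod C h = Dom C g \<longrightarrow> (\<forall>i < Card C (Cod C g).
        Fibm D (snd F h) (snd F g) i = snd F (Fibm C h g i)))"

definition opfun_id :: "('o \<Rightarrow> 'o) \<times> ('m \<Rightarrow> 'm)" where
  "opfun_id = (\<lambda>c. c, \<lambda>f. f)"

definition opfun_comp ::
  "('o2 \<Rightarrow> 'o3) \<times> ('m2 \<Rightarrow> 'm3) \<Rightarrow> ('o \<Rightarrow> 'o2) \<times> ('m \<Rightarrow> 'm2) \<Rightarrow> ('o \<Rightarrow> 'o3) \<times> ('m \<Rightarrow> 'm3)" where
  "opfun_comp G F = (fst G \<circ> fst F, snd G \<circ> snd F)"

definition arr_rel :: "('o, 'm) opcat \<Rightarrow> ('o \<times> 'o) set" where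
  "arr_rel C = {(Dom C f, Cod C f) | f. f \<in> Arr C}"

definition connected :: "('o, 'm) opcat \<Rightarrow> 'o \<Rightarrow> 'o \<Rightarrow> bool" where
  "connected C a b \<longleftrightarrow> a \<in> Obj C \<and> b \<in> Obj C \<and> (a, b) \<in> (arr_rel C \<union> (arr_rel C)\<inverse>)\<^sup>*"

definition genuine :: "('o, 'm) opcat \<Rightarrow> bool" where
  "genuine C \<longleftrightarrow>
     (\<forall>c\<in>Obj C. \<exists>!u. trivial C u \<and> connected C c u) \<and>
     (\<forall>u c. trivial C u \<and> connected C c u \<longrightarrow>
        (\<exists>!f. f \<in> Arr C \<and> Dom C f = c \<and> Cod C f = u))"

section \<open>The skew monoidal category Coll_C(Set)\<close>

text \<open>An object of Set/C is a set X of elements together with a map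
  \<open>\<partial> : X \<rightarrow> C\<close> (C the object set).  Families indexed by |d| are lists of length |d|.\<close>

type_synonym ('a, 'o) coll = "'a set \<times> ('a \<Rightarrow> 'o)"

definition is_coll :: "('o, 'm) opcat \<Rightarrow> ('a, 'o) coll \<Rightarrow> bool" where
  "is_coll C X \<longleftrightarrow> snd X ` fst X \<subseteq> Obj C"

definition coll_hom :: "('o, 'm) opcat \<Rightarrow> ('a, 'o) coll \<Rightarrow> ('b, 'o) coll \<Rightarrow> ('a \<Rightarrow> 'b) \<Rightarrow> bool" where
  "coll_hom C X Y f \<longleftrightarrow> (\<forall>x\<in>fst X. f x \<in> fst Y \<and> snd Y (f x) = snd X x)"

definition coll_iso :: "('o, 'm) opcat \<Rightarrow> ('a, 'o) coll \<Rightarrow> ('b, 'o) coll \<Rightarrow> ('a \<Rightarrow> 'b) \<Rightarrow> bool" where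
  "coll_iso C X Y f \<longleftrightarrow> coll_hom C X Y f \<and>
     (\<exists>g. coll_hom C Y X g \<and> (\<forall>x\<in>fst X. g (f x) = x) \<and> (\<forall>y\<in>fst Y. f (g y) = y))"

definition coll_tensor ::
  "('o, 'm) opcat \<Rightarrow> ('a, 'o) coll \<Rightarrow> ('b, 'o) coll \<Rightarrow> ('a \<times> 'm \<times> 'b list, 'o) coll" where
  "coll_tensor C X Y =
     ({(x, \<phi>, ys) | x \<phi> ys. \<phi> \<in> Arr C \<and> x \<in> fst X \<and> snd X x = Cod C \<phi> \<and>
          length ys = Card C (Cod C \<phi>) \<and>
          (\<forall>i < length ys. ys ! i \<in> fst Y \<and> snd Y (ys ! i) = Fib C \<phi> i)},
      \<lambda>(x, \<phi>, ys). Dom C \<phi>)"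

definition coll_unit :: "('o, 'm) opcat \<Rightarrow> ('o, 'o) coll" where
  "coll_unit C = ({u. trivial C u}, \<lambda>u. u)"

definition tensor_hom :: "('a \<Rightarrow> 'a2) \<Rightarrow> ('b \<Rightarrow> 'b2) \<Rightarrow> 'a \<times> 'm \<times> 'b list \<Rightarrow> 'a2 \<times> 'm \<times> 'b2 list" where
  "tensor_hom f g = (\<lambda>(x, \<phi>, ys). (f x, \<phi>, map g ys))"

text \<open>alpha(x, psi, y, phi, z) = (x, psi phi, y, phi^psi, z).\<close>
definition coll_alpha :: "('o, 'm) opcat \<Rightarrow>
    ('a \<times> 'm \<times> 'b list) \<times> 'm \<times> 'c list \<Rightarrow> 'a \<times> 'm \<times> ('b \<times> 'm \<times> 'c list) list" where
  "coll_alpha C = (\<lambda>((x, \<psi>, ys), \<phi>, zs).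
     (x, Comp C \<psi> \<phi>,
      map (\<lambda>j. (ys ! j, Fibm C \<phi> \<psi> j,
                 map (\<lambda>r. zs ! sfib_elem (Fmap C \<psi>) (Card C (Dom C \<psi>)) j r)
                     [0..<Card C (Fib C \<psi> j)]))
          [0..<Card C (Cod C \<psi>)]))"

definition coll_lambda :: "'o \<times> 'm \<times> 'a list \<Rightarrow> 'a" where
  "coll_lambda = (\<lambda>(u, \<phi>, xs). xs ! 0)"

definition coll_rho :: "('o, 'm) opcat \<Rightarrow> ('a, 'o) coll \<Rightarrow> 'a \<Rightarrow> 'a \<times> 'm \<times> 'o list" where
  "coll_rho C X = (\<lambda>x. (x, Idt C (snd X x),
                         map (\<lambda>i. Fib C (Idt C (snd X x)) i) [0..<Card C (snd X x)]))"

definition coll_skew_axioms :: "('o, 'm) opcat \<Rightarrow>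
    ('a, 'o) coll \<Rightarrow> ('b, 'o) coll \<Rightarrow> ('c, 'o) coll \<Rightarrow> ('d, 'o) coll \<Rightarrow> bool" where
  "coll_skew_axioms C W X Y Z \<longleftrightarrow>
     is_coll C (coll_tensor C X Y) \<and> is_coll C (coll_unit C) \<and>
     coll_hom C (coll_tensor C (coll_tensor C X Y) Z) (coll_tensor C X (coll_tensor C Y Z)) (coll_alpha C) \<and>
     coll_hom C (coll_tensor C (coll_unit C) X) X coll_lambda \<and>
     coll_hom C X (coll_tensor C X (coll_unit C)) (coll_rho C X) \<and>
     (\<forall>u\<in>fst (coll_unit C). coll_lambda (coll_rho C (coll_unit C) u) = u) \<and>
     (\<forall>t\<in>fst (coll_tensor C (coll_tensor C (coll_unit C) X) Y).
        coll_lambda (coll_alpha C t) = tensor_hom coll_lambda id t) \<and>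
     (\<forall>t\<in>fst (coll_tensor C X Y).
        coll_alpha C (coll_rho C (coll_tensor C X Y) t) = tensor_hom id (coll_rho C Y) t) \<and>
     (\<forall>t\<in>fst (coll_tensor C X Y).
        tensor_hom id coll_lambda (coll_alpha C (tensor_hom (coll_rho C X) id t)) = t) \<and>
     (\<forall>t\<in>fst (coll_tensor C (coll_tensor C (coll_tensor C W X) Y) Z).
        coll_alpha C (coll_alpha C t) =
        tensor_hom id (coll_alpha C) (coll_alpha C (tensor_hom (coll_alpha C) id t)))"

definition coll_tensor_functorial :: "('o, 'm) opcat \<Rightarrow>
    ('a, 'o) coll \<Rightarrow> ('a2, 'o) coll \<Rightarrow> ('a3, 'o) coll \<Rightarrow>
    ('b, 'o) coll \<Rightarrow> ('b2, 'o) coll \<Rightarrow> ('b3, 'o) coll \<Rightarrow>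
    ('a \<Rightarrow> 'a2) \<Rightarrow> ('a2 \<Rightarrow> 'a3) \<Rightarrow> ('b \<Rightarrow> 'b2) \<Rightarrow> ('b2 \<Rightarrow> 'b3) \<Rightarrow> bool" where
  "coll_tensor_functorial C X X' X'' Y Y' Y'' f f' g g' \<longleftrightarrow>
     (coll_hom C X X' f \<and> coll_hom C Y Y' g \<longrightarrow>
        coll_hom C (coll_tensor C X Y) (coll_tensor C X' Y') (tensor_hom f g)) \<and>
     (\<forall>t\<in>fst (coll_tensor C X Y). tensor_hom id id t = t) \<and>
     (\<forall>t\<in>fst (coll_tensor C X Y).
        tensor_hom (f' \<circ> f) (g' \<circ> g) t = tensor_hom f' g' (tensor_hom f g t))"

definition coll_skew_natural :: "('o, 'm) opcat \<Rightarrow>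
    ('a, 'o) coll \<Rightarrow> ('a2, 'o) coll \<Rightarrow> ('b, 'o) coll \<Rightarrow> ('b2, 'o) coll \<Rightarrow>
    ('c, 'o) coll \<Rightarrow> ('c2, 'o) coll \<Rightarrow>
    ('a \<Rightarrow> 'a2) \<Rightarrow> ('b \<Rightarrow> 'b2) \<Rightarrow> ('c \<Rightarrow> 'c2) \<Rightarrow> bool" where
  "coll_skew_natural C X X' Y Y' Z Z' f g h \<longleftrightarrow>
     (coll_hom C X X' f \<and> coll_hom C Y Y' g \<and> coll_hom C Z Z' h \<longrightarrow>
        (\<forall>t\<in>fst (coll_tensor C (coll_tensor C X Y) Z).
           coll_alpha C (tensor_hom (tensor_hom f g) h t) =
           tensor_hom f (tensor_hom g h) (coll_alpha C t)) \<and>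
        (\<forall>t\<in>fst (coll_tensor C (coll_unit C) X).
           coll_lambda (tensor_hom id f t) = f (coll_lambda t)) \<and>
        (\<forall>x\<in>fst X. coll_rho C X' (f x) = tensor_hom f id (coll_rho C X x)))"

text \<open>Coll(F) = F_! : Set/C -> Set/D, (F_! X)_d = sum over F c = d of X_c; on morphisms
  it is the identity on underlying functions.\<close>

definition coll_push :: "('o \<Rightarrow> 'o2) \<times> ('m \<Rightarrow> 'm2) \<Rightarrow> ('a, 'o) coll \<Rightarrow> ('a, 'o2) coll" where
  "coll_push F X = (fst X, fst F \<circ> snd X)"

definition coll_F2 :: "('o \<Rightarrow> 'o2) \<times> ('m \<Rightarrow> 'm2) \<Rightarrow> 'a \<times> 'm \<times> 'b list \<Rightarrow> 'a \<times> 'm2 \<times> 'b list" where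
  "coll_F2 F = (\<lambda>(x, \<phi>, ys). (x, snd F \<phi>, ys))"

definition coll_F0 :: "('o \<Rightarrow> 'o2) \<times> ('m \<Rightarrow> 'm2) \<Rightarrow> 'o \<Rightarrow> 'o2" where
  "coll_F0 F = fst F"

definition coll_opmonoidal :: "('o, 'm) opcat \<Rightarrow> ('o2, 'm2) opcat \<Rightarrow> ('o \<Rightarrow> 'o2) \<times> ('m \<Rightarrow> 'm2) \<Rightarrow>
    ('a, 'o) coll \<Rightarrow> ('a2, 'o) coll \<Rightarrow> ('b, 'o) coll \<Rightarrow> ('b2, 'o) coll \<Rightarrow> ('c, 'o) coll \<Rightarrow>
    ('a \<Rightarrow> 'a2) \<Rightarrow> ('b \<Rightarrow> 'b2) \<Rightarrow> bool" where
  "coll_opmonoidal C D F X X' Y Y' Z f g \<longleftrightarrow>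
     (is_coll C X \<longrightarrow> is_coll D (coll_push F X)) \<and>
     (coll_hom C X X' f \<longrightarrow> coll_hom D (coll_push F X) (coll_push F X') f) \<and>
     coll_hom D (coll_push F (coll_tensor C X Y))
                (coll_tensor D (coll_push F X) (coll_push F Y)) (coll_F2 F) \<and>
     coll_hom D (coll_push F (coll_unit C)) (coll_unit D) (coll_F0 F) \<and>
     (coll_hom C X X' f \<and> coll_hom C Y Y' g \<longrightarrow>
        (\<forall>t\<in>fst (coll_tensor C X Y). coll_F2 F (tensor_hom f g t) = tensor_hom f g (coll_F2 F t))) \<and>
     (\<forall>t\<in>fst (coll_tensor C (coll_tensor C X Y) Z).
        coll_alpha D (tensor_hom (coll_F2 F) id (coll_F2 F t)) =
        tensor_hom id (coll_F2 F) (coll_F2 F (coll_alpha C t))) \<and>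
     (\<forall>t\<in>fst (coll_tensor C (coll_unit C) X).
        coll_lambda (tensor_hom (coll_F0 F) id (coll_F2 F t)) = coll_lambda t) \<and>
     (\<forall>x\<in>fst X.
        tensor_hom id (coll_F0 F) (coll_F2 F (coll_rho C X x)) = coll_rho D (coll_push F X) x)"

end

theory Submission
  imports Defs
begin


lemma sl_basic:
  assumes "finite (S::nat set)"
  shows "set (sorted_list_of_set S) = S" "length (sorted_list_of_set S) = card S"
        "sorted_wrt (<) (sorted_list_of_set S)" "distinct (sorted_list_of_set S)"
  using assms by (auto simp: strict_sorted_list_of_set)

lemma sl_nth_in:
  assumes "finite (S::nat set)" "r < card S"
  shows "sorted_list_of_set S ! r \<in> S"
  using sl_basic[OF assms(1)] assms(2) by (metis nth_mem)

lemma sl_mono: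
  assumes "finite (S::nat set)" "r1 < r2" "r2 < card S"
  shows "sorted_list_of_set S ! r1 < sorted_list_of_set S ! r2"
  using sl_basic[OF assms(1)] assms(2,3) sorted_wrt_nth_less by metis

lemma sl_mono_iff:
  assumes "finite (S::nat set)" "r1 < card S" "r2 < card S"
  shows "sorted_list_of_set S ! r1 < sorted_list_of_set S ! r2 \<longleftrightarrow> r1 < r2"
  using sl_mono[OF assms(1) _ assms(3)] sl_mono[OF assms(1) _ assms(2)]
  by (metis less_asym linorder_neqE_nat)

lemma sl_rank:
  assumes "finite (S::nat set)" "r < card S"
  shows "card {y\<in>S. y < sorted_list_of_set S ! r} = r"
proof -
  let ?xs = "sorted_list_of_set S"
  have "{y\<in>S. y < ?xs ! r} = (\<lambda>j. ?xs ! j) ` {..<r}"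
  proof
    show "{y\<in>S. y < ?xs ! r} \<subseteq> (\<lambda>j. ?xs ! j) ` {..<r}"
    proof
      fix y assume y: "y \<in> {y\<in>S. y < ?xs ! r}"
      then obtain j where j: "j < card S" "y = ?xs ! j"
        using sl_basic[OF assms(1)] by (metis (no_types, lifting) in_set_conv_nth mem_Collect_eq)
      then have "j < r" using y sl_mono_iff[OF assms(1) j(1) assms(2)] by auto
      then show "y \<in> (\<lambda>j. ?xs ! j) ` {..<r}" using j by auto
    qed
    show "(\<lambda>j. ?xs ! j) ` {..<r} \<subseteq> {y\<in>S. y < ?xs ! r}"
      using sl_mono[OF assms(1) _ assms(2)] sl_nth_in[OF assms(1)] assms(2) by auto
  qed
  moreover have "inj_on (\<lambda>j. ?xs ! j) {..<r}"
    using sl_basic[OF assms(1)] assms(2) by (auto simp: inj_on_def nth_eq_iff_index_eq)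
  ultimately show ?thesis by (simp add: card_image)
qed

lemma sl_index:
  assumes "finite (S::nat set)" "x \<in> S"
  shows "card {y\<in>S. y < x} < card S" "sorted_list_of_set S ! card {y\<in>S. y < x} = x"
proof -
  obtain j where j: "j < card S" "x = sorted_list_of_set S ! j"
    using sl_basic[OF assms(1)] assms(2) by (metis in_set_conv_nth)
  then show "card {y\<in>S. y < x} < card S" "sorted_list_of_set S ! card {y\<in>S. y < x} = x"
    using sl_rank[OF assms(1) j(1)] by auto
qed

definition fibset :: "(nat \<Rightarrow> nat) \<Rightarrow> nat \<Rightarrow> nat \<Rightarrow> nat set" where
  "fibset f m i = {k. k < m \<and> f k = i}"

lemma fibset_finite[simp]: "finite (fibset f m i)"
  unfolding fibset_def by simp

lemma sfib_elem_alt: "sfib_elem f m i r = sorted_list_of_set (fibset f m i) ! r"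
  unfolding sfib_elem_def fibset_def by simp

lemma srank_alt: "k < m \<Longrightarrow> srank f k = card {y\<in>fibset f m (f k). y < k}"
  unfolding srank_def fibset_def by (rule arg_cong[where f=card]) auto

lemma F1:
  assumes "r < card {k. k < m \<and> f k = i}"
  shows "sfib_elem f m i r < m \<and> f (sfib_elem f m i r) = i"
  using sl_nth_in[of "fibset f m i" r] assms unfolding sfib_elem_alt
  by (auto simp: fibset_def)

lemma F2:
  assumes "r < card {k. k < m \<and> f k = i}"
  shows "srank f (sfib_elem f m i r) = r"
proof -
  have r: "r < card (fibset f m i)" using assms by (simp add: fibset_def)
  have a: "sfib_elem f m i r < m" "f (sfib_elem f m i r) = i" using F1[OF assms] by auto
  show ?thesis using srank_alt[OF a(1)] a(2) sl_rank[OF fibset_finite r]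
    by (simp add: sfib_elem_alt)
qed

lemma F3:
  assumes "k < m"
  shows "srank f k < card {k'. k' < m \<and> f k' = f k}" "sfib_elem f m (f k) (srank f k) = k"
proof -
  have kin: "k \<in> fibset f m (f k)" using assms by (simp add: fibset_def)
  show "srank f k < card {k'. k' < m \<and> f k' = f k}"
    using sl_index(1)[OF fibset_finite kin] srank_alt[OF assms] by (simp add: fibset_def)
  show "sfib_elem f m (f k) (srank f k) = k"
    using sl_index(2)[OF fibset_finite kin] srank_alt[OF assms] by (simp add: sfib_elem_alt)
qed

lemma F4:
  assumes "\<forall>k<m. f k = g k"
  shows "sfib_elem f m i r = sfib_elem g m i r" "card {k. k < m \<and> f k = i} = card {k. k < m \<and> g k = i}"
proof -
  have "{k. k < m \<and> f k = i} = {k. k < m \<and> g k = i}" using assms by auto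
  then show "sfib_elem f m i r = sfib_elem g m i r" "card {k. k < m \<and> f k = i} = card {k. k < m \<and> g k = i}"
    unfolding sfib_elem_def by simp_all
qed

lemma F5:
  assumes "\<forall>k<m. f k = 0" "r < m"
  shows "sfib_elem f m 0 r = r"
proof -
  have "{k. k < m \<and> f k = 0} = {0..<m}" using assms by auto
  then show ?thesis using assms unfolding sfib_elem_def by simp
qed

lemma F6:
  assumes "\<forall>k<m. f k = k" "j < m"
  shows "sfib_elem f m j 0 = j"
proof -
  have "{k. k < m \<and> f k = j} = {j}" using assms by auto
  then show ?thesis unfolding sfib_elem_def by simp
qed


lemma Pcomb:
  fixes p q h :: "nat \<Rightarrow> nat"
  assumes pb: "\<forall>a<m. p a < n"
    and s: "s < card {k. k < n \<and> q k = i}"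
    and kdef: "k = sfib_elem q n i s"
    and r: "r < card {a. a < m \<and> p a = k}"
    and Ndef: "N = card {a. a < m \<and> q (p a) = i}"
    and hdef: "\<forall>r'<N. h r' = srank q (p (sfib_elem (\<lambda>a. q (p a)) m i r'))"
  shows "sfib_elem h N s r < N \<and>
         sfib_elem (\<lambda>a. q (p a)) m i (sfib_elem h N s r) = sfib_elem p m k r"
proof -
  define A where "A = fibset (\<lambda>a. q (p a)) m i"
  define e where "e = (\<lambda>r'. sorted_list_of_set A ! r')"
  define B where "B = fibset h N s"
  define K where "K = fibset p m k"
  have NA: "N = card A" by (simp add: Ndef A_def fibset_def)
  have fA: "finite A" by (simp add: A_def)
  have eA: "\<And>r'. r' < N \<Longrightarrow> e r' \<in> A" using sl_nth_in[OF fA] NA e_def by simp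
  have eq: "\<And>r'. e r' = sfib_elem (\<lambda>a. q (p a)) m i r'" by (simp add: e_def A_def sfib_elem_alt)
  have kq: "k < n \<and> q k = i" using F1[OF s] kdef by simp
  have emono: "\<And>r1 r2. r1 < N \<Longrightarrow> r2 < N \<Longrightarrow> e r1 < e r2 \<longleftrightarrow> r1 < r2"
    using sl_mono_iff[OF fA] NA e_def by simp
  have einj: "inj_on e {..<N}"
    by (rule inj_onI) (metis emono lessThan_iff less_irrefl linorder_neqE_nat)
  have BN: "B \<subseteq> {..<N}" by (auto simp: B_def fibset_def)
  have img: "e ` B = K"
  proof
    show "e ` B \<subseteq> K"
    proof
      fix y assume "y \<in> e ` B"
      then obtain r' where r': "r' < N" "h r' = s" "y = e r'" by (auto simp: B_def fibset_def)
      have yA: "y < m" "q (p y) = i" using eA[OF r'(1)] r'(3) by (auto simp: A_def fibset_def)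
      have "srank q (p y) = s" using hdef r' eq by simp
      moreover have "p y < n" using pb yA by simp
      ultimately have "sfib_elem q n i s = p y" using F3(2)[of "p y" n q] yA by simp
      then show "y \<in> K" using yA kdef by (simp add: K_def fibset_def)
    qed
    show "K \<subseteq> e ` B"
    proof
      fix a assume a: "a \<in> K"
      then have aA: "a \<in> A" using kq by (auto simp: K_def A_def fibset_def)
      define j where "j = card {y\<in>A. y < a}"
      have j: "j < N" "e j = a" using sl_index[OF fA aA] NA by (auto simp: j_def e_def)
      have "h j = srank q k" using hdef j eq a by (simp add: K_def fibset_def)
      also have "\<dots> = s" using F2[OF s] kdef by simp
      finally show "a \<in> e ` B" using j by (auto simp: B_def fibset_def)
    qed
  qed
  have cardBK: "card B = card K"
    using img card_image[OF inj_on_subset[OF einj BN]] by simp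
  have fB: "finite B" by (simp add: B_def)
  have rB: "r < card B" using cardBK r by (simp add: K_def fibset_def)
  define b where "b = sorted_list_of_set B ! r"
  have bB: "b \<in> B" using sl_nth_in[OF fB rB] b_def by simp
  have bN: "b < N" using bB BN by auto
  have bsf: "sfib_elem h N s r = b" by (simp add: b_def B_def sfib_elem_alt)
  have "e ` {b'\<in>B. b' < b} = {y\<in>K. y < e b}"
  proof
    show "e ` {b'\<in>B. b' < b} \<subseteq> {y\<in>K. y < e b}"
      using img emono BN bN by auto
    show "{y\<in>K. y < e b} \<subseteq> e ` {b'\<in>B. b' < b}"
    proof
      fix y assume y: "y \<in> {y\<in>K. y < e b}"
      then obtain b' where b': "b' \<in> B" "y = e b'" using img by auto
      then have "b' < b" using y emono BN bN by auto
      then show "y \<in> e ` {b'\<in>B. b' < b}" using b' by auto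
    qed
  qed
  then have "card {y\<in>K. y < e b} = card {b'\<in>B. b' < b}"
    by (metis (no_types, lifting) card_image einj inj_on_subset BN mem_Collect_eq subsetI subset_iff)
  also have "\<dots> = r" using sl_rank[OF fB rB] b_def by simp
  finally have rk: "card {y\<in>K. y < e b} = r" .
  have ebK: "e b \<in> K" using img bB by auto
  have "sorted_list_of_set K ! r = e b" using sl_index(2)[of K "e b"] ebK rk by (simp add: K_def)
  then show ?thesis using bsf bN eq by (simp add: K_def sfib_elem_alt)
qed



lemma cat_comp: "opcat C \<Longrightarrow> f \<in> Arr C \<Longrightarrow> g \<in> Arr C \<Longrightarrow> Cod C f = Dom C g \<Longrightarrow>
   Comp C g f \<in> Arr C \<and> Dom C (Comp C g f) = Dom C f \<and> Cod C (Comp C g f) = Cod C g"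
  unfolding opcat_def is_category_def by blast
lemma cat_dc: "opcat C \<Longrightarrow> f \<in> Arr C \<Longrightarrow> Dom C f \<in> Obj C \<and> Cod C f \<in> Obj C"
  unfolding opcat_def is_category_def by blast
lemma cat_id: "opcat C \<Longrightarrow> c \<in> Obj C \<Longrightarrow> Idt C c \<in> Arr C \<and> Dom C (Idt C c) = c \<and> Cod C (Idt C c) = c"
  unfolding opcat_def is_category_def by blast
lemma cat_unit: "opcat C \<Longrightarrow> f \<in> Arr C \<Longrightarrow> Comp C (Idt C (Cod C f)) f = f \<and> Comp C f (Idt C (Dom C f)) = f"
  unfolding opcat_def is_category_def by blast
lemma cat_assoc: "opcat C \<Longrightarrow> f \<in> Arr C \<Longrightarrow> g \<in> Arr C \<Longrightarrow> h \<in> Arr C \<Longrightarrow> Cod C f = Dom C g \<Longrightarrow> Cod C g = Dom C h \<Longrightarrow>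
        Comp C h (Comp C g f) = Comp C (Comp C h g) f"
  unfolding opcat_def is_category_def by blast
lemma cf_bound: "opcat C \<Longrightarrow> f \<in> Arr C \<Longrightarrow> k < Card C (Dom C f) \<Longrightarrow> Fmap C f k < Card C (Cod C f)"
  unfolding opcat_def card_functor_def by blast
lemma cf_id: "opcat C \<Longrightarrow> c \<in> Obj C \<Longrightarrow> k < Card C c \<Longrightarrow> Fmap C (Idt C c) k = k"
  unfolding opcat_def card_functor_def by blast
lemma cf_comp: "opcat C \<Longrightarrow> f \<in> Arr C \<Longrightarrow> g \<in> Arr C \<Longrightarrow> Cod C f = Dom C g \<Longrightarrow>
   k < Card C (Dom C f) \<Longrightarrow> Fmap C (Comp C g f) k = Fmap C g (Fmap C f k)"
  unfolding opcat_def card_functor_def by blast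
lemma ff_obj: "opcat C \<Longrightarrow> f \<in> Arr C \<Longrightarrow> i < Card C (Cod C f) \<Longrightarrow> Fib C f i \<in> Obj C"
  unfolding opcat_def fibre_functors_def by blast
lemma ff_arr: "opcat C \<Longrightarrow> h \<in> Arr C \<Longrightarrow> g \<in> Arr C \<Longrightarrow> Cod C h = Dom C g \<Longrightarrow> i < Card C (Cod C g) \<Longrightarrow>
        Fibm C h g i \<in> Arr C \<and> Dom C (Fibm C h g i) = Fib C (Comp C g h) i \<and>
        Cod C (Fibm C h g i) = Fib C g i"
  unfolding opcat_def fibre_functors_def by blast
lemma ff_id: "opcat C \<Longrightarrow> g \<in> Arr C \<Longrightarrow> i < Card C (Cod C g) \<Longrightarrow> Fibm C (Idt C (Dom C g)) g i = Idt C (Fib C g i)"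
  unfolding opcat_def fibre_functors_def by blast
lemma ff_comp: "opcat C \<Longrightarrow> h \<in> Arr C \<Longrightarrow> h' \<in> Arr C \<Longrightarrow> g \<in> Arr C \<Longrightarrow> Cod C h = Dom C h' \<Longrightarrow> Cod C h' = Dom C g \<Longrightarrow>
        i < Card C (Cod C g) \<Longrightarrow>
           Fibm C (Comp C h' h) g i = Comp C (Fibm C h' g i) (Fibm C h (Comp C g h') i)"
  unfolding opcat_def fibre_functors_def by blast
lemma cc_card: "opcat C \<Longrightarrow> f \<in> Arr C \<Longrightarrow> i < Card C (Cod C f) \<Longrightarrow>
        Card C (Fib C f i) = card {k. k < Card C (Dom C f) \<and> Fmap C f k = i}"
  unfolding opcat_def card_compat_def by blast
lemma cc_map: "opcat C \<Longrightarrow> h \<in> Arr C \<Longrightarrow> g \<in> Arr C \<Longrightarrow> Cod C h = Dom C g \<Longrightarrow> i < Card C (Cod C g) \<Longrightarrow>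
        r < Card C (Fib C (Comp C g h) i) \<Longrightarrow>
          Fmap C (Fibm C h g i) r =
            srank (Fmap C g) (Fmap C h (sfib_elem (Fmap C (Comp C g h)) (Card C (Dom C h)) i r))"
  unfolding opcat_def card_compat_def by blast
lemma triv_id: "opcat C \<Longrightarrow> c \<in> Obj C \<Longrightarrow> i < Card C c \<Longrightarrow> trivial C (Fib C (Idt C c) i)"
  unfolding opcat_def by blast
lemma ds_obj: "opcat C \<Longrightarrow> \<phi> \<in> Arr C \<Longrightarrow> \<psi> \<in> Arr C \<Longrightarrow> Cod C \<phi> = Dom C \<psi> \<Longrightarrow> k < Card C (Cod C \<phi>) \<Longrightarrow>
        Fib C \<phi> k = Fib C (Fibm C \<phi> \<psi> (Fmap C \<psi> k)) (srank (Fmap C \<psi>) k)"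
  unfolding opcat_def double_slice_def by blast
lemma ds_arr: "opcat C \<Longrightarrow> h \<in> Arr C \<Longrightarrow> \<phi> \<in> Arr C \<Longrightarrow> \<psi> \<in> Arr C \<Longrightarrow> Cod C h = Dom C \<phi> \<Longrightarrow> Cod C \<phi> = Dom C \<psi> \<Longrightarrow>
        k < Card C (Cod C \<phi>) \<Longrightarrow>
          Fibm C h \<phi> k =
            Fibm C (Fibm C h (Comp C \<psi> \<phi>) (Fmap C \<psi> k)) (Fibm C \<phi> \<psi> (Fmap C \<psi> k))
                   (srank (Fmap C \<psi>) k)"
  unfolding opcat_def double_slice_def by blast

lemma triv_D: "trivial C u \<Longrightarrow> u \<in> Obj C \<and> Card C u = 1"
  unfolding trivial_def by blast
lemma triv_fib: "trivial C u \<Longrightarrow> f \<in> Arr C \<Longrightarrow> Cod C f = u \<Longrightarrow> Fib C f 0 = Dom C f"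
  unfolding trivial_def by blast
lemma triv_fibm: "trivial C u \<Longrightarrow> h \<in> Arr C \<Longrightarrow> g \<in> Arr C \<Longrightarrow> Cod C h = Dom C g \<Longrightarrow> Cod C g = u \<Longrightarrow> Fibm C h g 0 = h"
  unfolding trivial_def by blast

lemma tensor_mem: "(x, \<phi>, ys) \<in> fst (coll_tensor C X Y) \<longleftrightarrow>
   \<phi> \<in> Arr C \<and> x \<in> fst X \<and> snd X x = Cod C \<phi> \<and> length ys = Card C (Cod C \<phi>) \<and>
          (\<forall>i < length ys. ys ! i \<in> fst Y \<and> snd Y (ys ! i) = Fib C \<phi> i)"
  unfolding coll_tensor_def by simp
lemma tensor_snd[simp]: "snd (coll_tensor C X Y) (x, \<phi>, ys) = Dom C \<phi>"
  unfolding coll_tensor_def by simp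
lemma unit_fst[simp]: "fst (coll_unit C) = {u. trivial C u}" and unit_snd[simp]: "snd (coll_unit C) u = u"
  unfolding coll_unit_def by simp_all

lemma arr_sfib:
  assumes C: "opcat C" and psi: "\<psi> \<in> Arr C" and j: "j < Card C (Cod C \<psi>)"
    and r: "r < Card C (Fib C \<psi> j)"
  shows "sfib_elem (Fmap C \<psi>) (Card C (Dom C \<psi>)) j r < Card C (Dom C \<psi>) \<and>
         Fmap C \<psi> (sfib_elem (Fmap C \<psi>) (Card C (Dom C \<psi>)) j r) = j \<and>
         srank (Fmap C \<psi>) (sfib_elem (Fmap C \<psi>) (Card C (Dom C \<psi>)) j r) = r"
  using cc_card[OF C psi j] r F1 F2 by metis

lemma map_nth_id: "length ys = n \<Longrightarrow> (\<forall>r<n. f r = r) \<Longrightarrow> map (\<lambda>r. ys ! f r) [0..<n] = ys"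
  by (simp add: list_eq_iff_nth_eq)



lemma alpha_mem:
  assumes C: "opcat C" and t: "((x, \<psi>, ys), \<phi>, zs) \<in> fst (coll_tensor C (coll_tensor C X Y) Z)"
  shows "coll_alpha C ((x, \<psi>, ys), \<phi>, zs) \<in> fst (coll_tensor C X (coll_tensor C Y Z))"
proof -
  from t have phi: "\<phi> \<in> Arr C" and psi: "\<psi> \<in> Arr C" and x: "x \<in> fst X" "snd X x = Cod C \<psi>"
    and ys: "length ys = Card C (Cod C \<psi>)" "\<forall>i<length ys. ys ! i \<in> fst Y \<and> snd Y (ys ! i) = Fib C \<psi> i"
    and pc: "Dom C \<psi> = Cod C \<phi>" and zs: "length zs = Card C (Cod C \<phi>)"
    "\<forall>i<length zs. zs ! i \<in> fst Z \<and> snd Z (zs ! i) = Fib C \<phi> i"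
    by (auto simp: tensor_mem)
  have comp: "Comp C \<psi> \<phi> \<in> Arr C" "Cod C (Comp C \<psi> \<phi>) = Cod C \<psi>" "Dom C (Comp C \<psi> \<phi>) = Dom C \<phi>"
    using cat_comp[OF C phi psi pc[symmetric]] by auto
  have comp_j: "(ys ! j, Fibm C \<phi> \<psi> j,
                 map (\<lambda>r. zs ! sfib_elem (Fmap C \<psi>) (Card C (Dom C \<psi>)) j r)
                     [0..<Card C (Fib C \<psi> j)]) \<in> fst (coll_tensor C Y Z) \<and>
        Dom C (Fibm C \<phi> \<psi> j) = Fib C (Comp C \<psi> \<phi>) j" if j: "j < Card C (Cod C \<psi>)" for j
  proof -
    have fa: "Fibm C \<phi> \<psi> j \<in> Arr C" "Dom C (Fibm C \<phi> \<psi> j) = Fib C (Comp C \<psi> \<phi>) j"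
      "Cod C (Fibm C \<phi> \<psi> j) = Fib C \<psi> j"
      using ff_arr[OF C phi psi pc[symmetric] j] by auto
    have el: "zs ! sfib_elem (Fmap C \<psi>) (Card C (Dom C \<psi>)) j r \<in> fst Z \<and>
      snd Z (zs ! sfib_elem (Fmap C \<psi>) (Card C (Dom C \<psi>)) j r) = Fib C (Fibm C \<phi> \<psi> j) r"
      if r: "r < Card C (Fib C \<psi> j)" for r
    proof -
      define k where "k = sfib_elem (Fmap C \<psi>) (Card C (Dom C \<psi>)) j r"
      have k: "k < Card C (Dom C \<psi>)" "Fmap C \<psi> k = j" "srank (Fmap C \<psi>) k = r"
        using arr_sfib[OF C psi j r] k_def by auto
      have "Fib C \<phi> k = Fib C (Fibm C \<phi> \<psi> j) r"
        using ds_obj[OF C phi psi pc[symmetric]] k pc by auto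
      then show ?thesis using zs k pc k_def by auto
    qed
    have "(ys ! j, Fibm C \<phi> \<psi> j,
                 map (\<lambda>r. zs ! sfib_elem (Fmap C \<psi>) (Card C (Dom C \<psi>)) j r)
                     [0..<Card C (Fib C \<psi> j)]) \<in> fst (coll_tensor C Y Z)"
      apply (rule tensor_mem[THEN iffD2])
      using fa el ys j by simp
    then show ?thesis using fa(2) by simp
  qed
  show ?thesis unfolding coll_alpha_def prod.case
    apply (rule tensor_mem[THEN iffD2])
    using comp comp_j x ys by simp
qed

lemma alpha_snd:
  assumes C: "opcat C" and t: "((x, \<psi>, ys), \<phi>, zs) \<in> fst (coll_tensor C (coll_tensor C X Y) Z)"
  shows "snd (coll_tensor C X (coll_tensor C Y Z)) (coll_alpha C ((x, \<psi>, ys), \<phi>, zs)) = Dom C \<phi>"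
proof -
  from t have phi: "\<phi> \<in> Arr C" and psi: "\<psi> \<in> Arr C" and pc: "Dom C \<psi> = Cod C \<phi>"
    by (auto simp: tensor_mem)
  show ?thesis using cat_comp[OF C phi psi pc[symmetric]] unfolding coll_alpha_def by simp
qed

lemma alpha_hom:
  assumes C: "opcat C"
  shows "coll_hom C (coll_tensor C (coll_tensor C X Y) Z) (coll_tensor C X (coll_tensor C Y Z)) (coll_alpha C)"
  unfolding coll_hom_def
proof
  fix t assume t: "t \<in> fst (coll_tensor C (coll_tensor C X Y) Z)"
  obtain x \<psi> ys \<phi> zs where td: "t = ((x, \<psi>, ys), \<phi>, zs)" by (cases t) auto
  show "coll_alpha C t \<in> fst (coll_tensor C X (coll_tensor C Y Z)) \<and>
         snd (coll_tensor C X (coll_tensor C Y Z)) (coll_alpha C t) = snd (coll_tensor C (coll_tensor C X Y) Z) t"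
    using alpha_mem[OF C t[unfolded td]] alpha_snd[OF C t[unfolded td]] td by simp
qed

lemma lambda_hom: "coll_hom C (coll_tensor C (coll_unit C) X) X coll_lambda"
  unfolding coll_hom_def
proof
  fix t assume t: "t \<in> fst (coll_tensor C (coll_unit C) X)"
  obtain u \<phi> xs where td: "t = (u, \<phi>, xs)" by (cases t) auto
  have u: "trivial C u" "Cod C \<phi> = u" "\<phi> \<in> Arr C" using t td by (auto simp: tensor_mem)
  have m: "\<phi> \<in> Arr C \<and> u \<in> fst (coll_unit C) \<and> snd (coll_unit C) u = Cod C \<phi> \<and> length xs = Card C (Cod C \<phi>) \<and>
          (\<forall>i < length xs. xs ! i \<in> fst X \<and> snd X (xs ! i) = Fib C \<phi> i)"
    using t[unfolded td tensor_mem] .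
  then have l: "length xs = 1" using triv_D[OF u(1)] u(2) by simp
  have "xs ! 0 \<in> fst X \<and> snd X (xs ! 0) = Fib C \<phi> 0" using m l by simp
  then show "coll_lambda t \<in> fst X \<and> snd X (coll_lambda t) = snd (coll_tensor C (coll_unit C) X) t"
    using td triv_fib[OF u(1) u(3) u(2)] by (simp add: coll_lambda_def)
qed

lemma rho_mem:
  assumes C: "opcat C" and X: "is_coll C X" and x: "x \<in> fst X"
  shows "coll_rho C X x \<in> fst (coll_tensor C X (coll_unit C)) \<and> snd (coll_tensor C X (coll_unit C)) (coll_rho C X x) = snd X x"
proof -
  have c: "snd X x \<in> Obj C" using X x by (auto simp: is_coll_def)
  have i: "Idt C (snd X x) \<in> Arr C" "Dom C (Idt C (snd X x)) = snd X x" "Cod C (Idt C (snd X x)) = snd X x"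
    using cat_id[OF C c] by auto
  have tr: "\<And>i. i < Card C (snd X x) \<Longrightarrow> trivial C (Fib C (Idt C (snd X x)) i)" using triv_id[OF C c] by blast
  show ?thesis unfolding coll_rho_def
    apply (simp only: prod.case tensor_snd)
    apply (intro conjI tensor_mem[THEN iffD2])
    using i tr x apply simp_all
    done
qed

lemma rho_hom:
  assumes C: "opcat C" and X: "is_coll C X"
  shows "coll_hom C X (coll_tensor C X (coll_unit C)) (coll_rho C X)"
  unfolding coll_hom_def
proof (rule ballI)
  fix x assume "x \<in> fst X"
  then show "coll_rho C X x \<in> fst (coll_tensor C X (coll_unit C)) \<and>
      snd (coll_tensor C X (coll_unit C)) (coll_rho C X x) = snd X x"
    by (rule rho_mem[OF C X])
qed



lemma ax_lr:
  assumes C: "opcat C" and u: "trivial C u"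
  shows "coll_lambda (coll_rho C (coll_unit C) u) = u"
proof -
  have u1: "u \<in> Obj C" "Card C u = 1" using triv_D[OF u] by auto
  have i: "Idt C u \<in> Arr C" "Dom C (Idt C u) = u" "Cod C (Idt C u) = u" using cat_id[OF C u1(1)] by auto
  have "Fib C (Idt C u) 0 = u" using triv_fib[OF u i(1) i(3)] i(2) by simp
  then show ?thesis using u1 by (simp add: coll_rho_def coll_lambda_def)
qed

lemma ax_lalpha:
  assumes C: "opcat C" and t: "((u, \<psi>, xs), \<phi>, ys) \<in> fst (coll_tensor C (coll_tensor C (coll_unit C) X) Y)"
  shows "coll_lambda (coll_alpha C ((u, \<psi>, xs), \<phi>, ys)) = tensor_hom coll_lambda id ((u, \<psi>, xs), \<phi>, ys)"
proof -
  from t have phi: "\<phi> \<in> Arr C" and psi: "\<psi> \<in> Arr C" and u: "trivial C u" "u = Cod C \<psi>"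
    and pc: "Dom C \<psi> = Cod C \<phi>" and ys: "length ys = Card C (Cod C \<phi>)"
    by (auto simp: tensor_mem)
  have c1: "Card C (Cod C \<psi>) = 1" using triv_D[OF u(1)] u(2) by simp
  have fm: "Fibm C \<phi> \<psi> 0 = \<phi>" using triv_fibm[OF u(1) phi psi pc[symmetric] u(2)[symmetric]] .
  have fb: "Fib C \<psi> 0 = Dom C \<psi>" using triv_fib[OF u(1) psi u(2)[symmetric]] .
  have z: "\<forall>k<Card C (Dom C \<psi>). Fmap C \<psi> k = 0" using cf_bound[OF C psi] c1 by auto
  have sf: "\<And>r. r < Card C (Dom C \<psi>) \<Longrightarrow> sfib_elem (Fmap C \<psi>) (Card C (Dom C \<psi>)) 0 r = r"
    using F5[OF z] by blast
  have "map (\<lambda>r. ys ! sfib_elem (Fmap C \<psi>) (Card C (Dom C \<psi>)) 0 r) [0..<Card C (Fib C \<psi> 0)] = ys"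
    using sf fb pc ys by (intro map_nth_id) simp_all
  then show ?thesis using c1 fm by (simp add: coll_alpha_def coll_lambda_def tensor_hom_def)
qed


lemma ax_arho:
  assumes C: "opcat C" and t: "(x, \<phi>, ys) \<in> fst (coll_tensor C X Y)"
  shows "coll_alpha C (coll_rho C (coll_tensor C X Y) (x, \<phi>, ys)) = tensor_hom id (coll_rho C Y) (x, \<phi>, ys)"
proof -
  from t have phi: "\<phi> \<in> Arr C" and ys: "length ys = Card C (Cod C \<phi>)"
    "\<forall>i<length ys. ys ! i \<in> fst Y \<and> snd Y (ys ! i) = Fib C \<phi> i"
    by (auto simp: tensor_mem)
  define d where "d = Dom C \<phi>"
  have d: "d \<in> Obj C" using cat_dc[OF C phi] d_def by simp
  have i: "Idt C d \<in> Arr C" "Dom C (Idt C d) = d" "Cod C (Idt C d) = d" using cat_id[OF C d] by auto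
  have cu: "Comp C \<phi> (Idt C d) = \<phi>" using cat_unit[OF C phi] d_def by simp
  have comp: "(ys ! j, Fibm C (Idt C d) \<phi> j,
            map (\<lambda>r. map (Fib C (Idt C d)) [0..<Card C d] ! sfib_elem (Fmap C \<phi>) (Card C d) j r)
               [0..<Card C (Fib C \<phi> j)]) = coll_rho C Y (ys ! j)"
    if j: "j < Card C (Cod C \<phi>)" for j
  proof -
    have fm: "Fibm C (Idt C d) \<phi> j = Idt C (Fib C \<phi> j)" using ff_id[OF C phi j] d_def by simp
    have lst: "map (\<lambda>r. map (Fib C (Idt C d)) [0..<Card C d] ! sfib_elem (Fmap C \<phi>) (Card C d) j r)
               [0..<Card C (Fib C \<phi> j)] = map (Fib C (Idt C (Fib C \<phi> j))) [0..<Card C (Fib C \<phi> j)]"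
    proof (rule map_cong[OF refl])
      fix r assume "r \<in> set [0..<Card C (Fib C \<phi> j)]"
      then have r: "r < Card C (Fib C \<phi> j)" by simp
      define k where "k = sfib_elem (Fmap C \<phi>) (Card C d) j r"
      have k: "k < Card C d" "Fmap C \<phi> k = j" "srank (Fmap C \<phi>) k = r"
        using arr_sfib[OF C phi j r] k_def d_def by auto
      have dd: "Cod C (Idt C d) = Dom C \<phi>" using i d_def by simp
      have "Fib C (Idt C d) k = Fib C (Fibm C (Idt C d) \<phi> (Fmap C \<phi> k)) (srank (Fmap C \<phi>) k)"
        by (rule ds_obj[OF C i(1) phi dd]) (simp add: i k)
      then have "Fib C (Idt C d) k = Fib C (Fibm C (Idt C d) \<phi> j) r" using k by simp
      then show "map (Fib C (Idt C d)) [0..<Card C d] ! k = Fib C (Idt C (Fib C \<phi> j)) r"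
        using k fm by simp
    qed
    show ?thesis using lst fm ys j by (simp add: coll_rho_def)
  qed
  have "map (\<lambda>j. (ys ! j, Fibm C (Idt C d) \<phi> j,
            map (\<lambda>r. map (Fib C (Idt C d)) [0..<Card C d] ! sfib_elem (Fmap C \<phi>) (Card C d) j r)
               [0..<Card C (Fib C \<phi> j)])) [0..<Card C (Cod C \<phi>)] = map (coll_rho C Y) ys"
    using comp ys(1) by (simp add: list_eq_iff_nth_eq)
  then show ?thesis using i cu d_def
    by (simp add: coll_alpha_def coll_rho_def tensor_hom_def)
qed

lemma ax_lar:
  assumes C: "opcat C" and X: "is_coll C X" and t: "(x, \<phi>, ys) \<in> fst (coll_tensor C X Y)"
  shows "tensor_hom id coll_lambda (coll_alpha C (tensor_hom (coll_rho C X) id (x, \<phi>, ys))) = (x, \<phi>, ys)"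
proof -
  from t have phi: "\<phi> \<in> Arr C" and x: "x \<in> fst X" "snd X x = Cod C \<phi>" and ys: "length ys = Card C (Cod C \<phi>)"
    by (auto simp: tensor_mem)
  define c where "c = Cod C \<phi>"
  have c: "c \<in> Obj C" using cat_dc[OF C phi] c_def by simp
  have i: "Idt C c \<in> Arr C" "Dom C (Idt C c) = c" "Cod C (Idt C c) = c" using cat_id[OF C c] by auto
  have cu: "Comp C (Idt C c) \<phi> = \<phi>" using cat_unit[OF C phi] c_def by simp
  have comp: "coll_lambda (map (Fib C (Idt C c)) [0..<Card C c] ! j, Fibm C \<phi> (Idt C c) j,
            map (\<lambda>r. ys ! sfib_elem (Fmap C (Idt C c)) (Card C c) j r)
               [0..<Card C (Fib C (Idt C c) j)]) = ys ! j"
    if j: "j < Card C c" for j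
  proof -
    have tr: "Card C (Fib C (Idt C c) j) = 1" using triv_D[OF triv_id[OF C c j]] by simp
    have "sfib_elem (Fmap C (Idt C c)) (Card C c) j 0 = j"
      using F6[of "Card C c" "Fmap C (Idt C c)" j] cf_id[OF C c] j by blast
    then show ?thesis using tr by (simp add: coll_lambda_def)
  qed
  have "map (\<lambda>j. coll_lambda (map (Fib C (Idt C c)) [0..<Card C c] ! j, Fibm C \<phi> (Idt C c) j,
            map (\<lambda>r. ys ! sfib_elem (Fmap C (Idt C c)) (Card C c) j r)
               [0..<Card C (Fib C (Idt C c) j)])) [0..<Card C c] = ys"
    using comp ys c_def by (simp add: list_eq_iff_nth_eq)
  then show ?thesis using i cu c_def x
    by (simp add: coll_alpha_def coll_rho_def tensor_hom_def o_def)
qed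



lemma ax_pent:
  assumes C: "opcat C"
    and t: "(((w, \<chi>, xs), \<psi>, ys), \<phi>, zs) \<in> fst (coll_tensor C (coll_tensor C (coll_tensor C W X) Y) Z)"
  shows "coll_alpha C (coll_alpha C (((w, \<chi>, xs), \<psi>, ys), \<phi>, zs)) =
        tensor_hom id (coll_alpha C) (coll_alpha C (tensor_hom (coll_alpha C) id (((w, \<chi>, xs), \<psi>, ys), \<phi>, zs)))"
proof -
  from t have phi: "\<phi> \<in> Arr C" and psi: "\<psi> \<in> Arr C" and chi: "\<chi> \<in> Arr C"
    and pc: "Dom C \<psi> = Cod C \<phi>" and cp: "Dom C \<chi> = Cod C \<psi>"
    and ys: "length ys = Card C (Cod C \<psi>)"
    by (auto simp: tensor_mem)
  define sfe where "sfe = (\<lambda>g j r. sfib_elem (Fmap C g) (Card C (Dom C g)) j r)"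
  define L1 where "L1 = map (\<lambda>j. (ys ! j, Fibm C \<phi> \<psi> j, map (\<lambda>r. zs ! sfe \<psi> j r) [0..<Card C (Fib C \<psi> j)]))
                        [0..<Card C (Cod C \<psi>)]"
  define M where "M = map (\<lambda>i. (xs ! i, Fibm C \<psi> \<chi> i, map (\<lambda>s. ys ! sfe \<chi> i s) [0..<Card C (Fib C \<chi> i)]))
                        [0..<Card C (Cod C \<chi>)]"
  have cpsiphi: "Comp C \<psi> \<phi> \<in> Arr C" "Dom C (Comp C \<psi> \<phi>) = Dom C \<phi>" "Cod C (Comp C \<psi> \<phi>) = Cod C \<psi>"
    using cat_comp[OF C phi psi pc[symmetric]] by auto
  have cchipsi: "Comp C \<chi> \<psi> \<in> Arr C" "Dom C (Comp C \<chi> \<psi>) = Dom C \<psi>" "Cod C (Comp C \<chi> \<psi>) = Cod C \<chi>"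
    using cat_comp[OF C psi chi cp[symmetric]] by auto
  have assoc: "Comp C \<chi> (Comp C \<psi> \<phi>) = Comp C (Comp C \<chi> \<psi>) \<phi>"
    using cat_assoc[OF C phi psi chi pc[symmetric] cp[symmetric]] .
  have lhs: "coll_alpha C (coll_alpha C (((w, \<chi>, xs), \<psi>, ys), \<phi>, zs)) =
     (w, Comp C \<chi> (Comp C \<psi> \<phi>), map (\<lambda>i. (xs ! i, Fibm C (Comp C \<psi> \<phi>) \<chi> i,
          map (\<lambda>s. L1 ! sfe \<chi> i s) [0..<Card C (Fib C \<chi> i)])) [0..<Card C (Cod C \<chi>)])"
    by (simp add: coll_alpha_def L1_def sfe_def)
  have rhs: "tensor_hom id (coll_alpha C) (coll_alpha C (tensor_hom (coll_alpha C) id (((w, \<chi>, xs), \<psi>, ys), \<phi>, zs))) =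
     (w, Comp C (Comp C \<chi> \<psi>) \<phi>, map (\<lambda>i. coll_alpha C (M ! i, Fibm C \<phi> (Comp C \<chi> \<psi>) i,
          map (\<lambda>r. zs ! sfe (Comp C \<chi> \<psi>) i r) [0..<Card C (Fib C (Comp C \<chi> \<psi>) i)])) [0..<Card C (Cod C \<chi>)])"
    using cchipsi by (simp add: coll_alpha_def tensor_hom_def M_def sfe_def)
  have comp: "coll_alpha C (M ! i, Fibm C \<phi> (Comp C \<chi> \<psi>) i,
          map (\<lambda>r. zs ! sfe (Comp C \<chi> \<psi>) i r) [0..<Card C (Fib C (Comp C \<chi> \<psi>) i)]) =
        (xs ! i, Fibm C (Comp C \<psi> \<phi>) \<chi> i, map (\<lambda>s. L1 ! sfe \<chi> i s) [0..<Card C (Fib C \<chi> i)])"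
    if i: "i < Card C (Cod C \<chi>)" for i
  proof -
    define psii where "psii = Fibm C \<psi> \<chi> i"
    define phii where "phii = Fibm C \<phi> (Comp C \<chi> \<psi>) i"
    define Zi where "Zi = map (\<lambda>r. zs ! sfe (Comp C \<chi> \<psi>) i r) [0..<Card C (Fib C (Comp C \<chi> \<psi>) i)]"
    have ic: "i < Card C (Cod C (Comp C \<chi> \<psi>))" using i cchipsi by simp
    have psii: "psii \<in> Arr C" "Dom C psii = Fib C (Comp C \<chi> \<psi>) i" "Cod C psii = Fib C \<chi> i"
      using ff_arr[OF C psi chi cp[symmetric] i] psii_def by auto
    have phii: "phii \<in> Arr C" "Dom C phii = Fib C (Comp C (Comp C \<chi> \<psi>) \<phi>) i" "Cod C phii = Fib C (Comp C \<chi> \<psi>) i"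
      using ff_arr[OF C phi cchipsi(1) _ ic] pc cchipsi phii_def by auto
    have fcomp: "Fibm C (Comp C \<psi> \<phi>) \<chi> i = Comp C psii phii"
      using ff_comp[OF C phi psi chi pc[symmetric] cp[symmetric] i] psii_def phii_def by simp
    have Mi: "M ! i = (xs ! i, psii, map (\<lambda>s. ys ! sfe \<chi> i s) [0..<Card C (Fib C \<chi> i)])"
      using i by (simp add: M_def psii_def)
    have L1k: "L1 ! k = (ys ! k, Fibm C \<phi> \<psi> k, map (\<lambda>r. zs ! sfe \<psi> k r) [0..<Card C (Fib C \<psi> k)])"
      if "k < Card C (Cod C \<psi>)" for k using that by (simp add: L1_def)
    have sc: "(ys ! sfe \<chi> i s, Fibm C phii psii s, map (\<lambda>r. Zi ! sfe psii s r) [0..<Card C (Fib C psii s)])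
            = L1 ! sfe \<chi> i s" if s: "s < Card C (Fib C \<chi> i)" for s
    proof -
      define k where "k = sfe \<chi> i s"
      have k: "k < Card C (Dom C \<chi>)" "Fmap C \<chi> k = i" "srank (Fmap C \<chi>) k = s"
        using arr_sfib[OF C chi i s] k_def sfe_def by auto
      have kc: "k < Card C (Cod C \<psi>)" using k cp by simp
      have fibeq: "Fib C \<psi> k = Fib C psii s"
        using ds_obj[OF C psi chi cp[symmetric] kc] k psii_def by simp
      have fmeq: "Fibm C \<phi> \<psi> k = Fibm C phii psii s"
        using ds_arr[OF C phi psi chi pc[symmetric] cp[symmetric] kc] k psii_def phii_def by simp
      have lst: "map (\<lambda>r. Zi ! sfe psii s r) [0..<Card C (Fib C psii s)] =
                 map (\<lambda>r. zs ! sfe \<psi> k r) [0..<Card C (Fib C \<psi> k)]"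
      proof (rule map_cong)
        show "[0..<Card C (Fib C psii s)] = [0..<Card C (Fib C \<psi> k)]" using fibeq by simp
      next
        fix r assume "r \<in> set [0..<Card C (Fib C \<psi> k)]"
        then have r: "r < Card C (Fib C \<psi> k)" by simp
        define m where "m = Card C (Dom C \<psi>)"
        define n where "n = Card C (Cod C \<psi>)"
        define N where "N = card {a. a < m \<and> Fmap C \<chi> (Fmap C \<psi> a) = i}"
        have fcp: "\<forall>a<m. Fmap C (Comp C \<chi> \<psi>) a = Fmap C \<chi> (Fmap C \<psi> a)"
          using cf_comp[OF C psi chi cp[symmetric]] m_def by simp
        have pb: "\<forall>a<m. Fmap C \<psi> a < n" using cf_bound[OF C psi] m_def n_def by simp
        have s': "s < card {k. k < n \<and> Fmap C \<chi> k = i}" using cc_card[OF C chi i] s cp n_def by simp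
        have kd: "k = sfib_elem (Fmap C \<chi>) n i s" using k_def sfe_def cp n_def by simp
        have r': "r < card {a. a < m \<and> Fmap C \<psi> a = k}" using cc_card[OF C psi kc] r m_def by simp
        have NF: "Card C (Fib C (Comp C \<chi> \<psi>) i) = N"
          using cc_card[OF C cchipsi(1) ic] cchipsi F4(2)[OF fcp] m_def N_def by simp
        have hd: "\<forall>r'<N. Fmap C psii r' = srank (Fmap C \<chi>) (Fmap C \<psi>
                      (sfib_elem (\<lambda>a. Fmap C \<chi> (Fmap C \<psi> a)) m i r'))"
        proof (intro allI impI)
          fix r' assume "r' < N"
          then have "r' < Card C (Fib C (Comp C \<chi> \<psi>) i)" using NF by simp
          then show "Fmap C psii r' = srank (Fmap C \<chi>) (Fmap C \<psi>
                      (sfib_elem (\<lambda>a. Fmap C \<chi> (Fmap C \<psi> a)) m i r'))"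
            using cc_map[OF C psi chi cp[symmetric] i] psii_def F4(1)[OF fcp] m_def by simp
        qed
        have P: "sfib_elem (Fmap C psii) N s r < N \<and>
           sfib_elem (\<lambda>a. Fmap C \<chi> (Fmap C \<psi> a)) m i (sfib_elem (Fmap C psii) N s r) =
           sfib_elem (Fmap C \<psi>) m k r"
          by (rule Pcomb[OF pb s' kd r' N_def hd])
        have "sfe psii s r = sfib_elem (Fmap C psii) N s r" using sfe_def psii NF by simp
        then show "Zi ! sfe psii s r = zs ! sfe \<psi> k r"
          using P NF F4(1)[OF fcp] unfolding Zi_def sfe_def m_def cchipsi by simp
      qed
      show ?thesis using lst fmeq L1k[OF kc] k_def by simp
    qed
    have "coll_alpha C (M ! i, phii, Zi) =
        (xs ! i, Comp C psii phii, map (\<lambda>s. (ys ! sfe \<chi> i s, Fibm C phii psii s,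
           map (\<lambda>r. Zi ! sfe psii s r) [0..<Card C (Fib C psii s)])) [0..<Card C (Fib C \<chi> i)])"
      using Mi psii by (simp add: coll_alpha_def sfe_def)
    also have "\<dots> = (xs ! i, Fibm C (Comp C \<psi> \<phi>) \<chi> i, map (\<lambda>s. L1 ! sfe \<chi> i s) [0..<Card C (Fib C \<chi> i)])"
      using sc fcomp by simp
    finally show ?thesis by (simp add: phii_def Zi_def)
  qed
  show ?thesis unfolding lhs rhs using assoc comp by simp
qed



lemma tensor_coll: "opcat C \<Longrightarrow> is_coll C (coll_tensor C X Y)"
  unfolding is_coll_def
proof
  fix c assume C: "opcat C" and "c \<in> snd (coll_tensor C X Y) ` fst (coll_tensor C X Y)"
  then obtain x \<phi> ys where "(x, \<phi>, ys) \<in> fst (coll_tensor C X Y)" "c = Dom C \<phi>" by auto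
  then show "c \<in> Obj C" using cat_dc[OF C] by (auto simp: tensor_mem)
qed

lemma unit_coll: "is_coll C (coll_unit C)"
  by (auto simp: is_coll_def dest: triv_D)

lemma functorial:
  "coll_tensor_functorial C X X' X'' Y Y' Y'' f f' g g'"
  unfolding coll_tensor_functorial_def
proof (intro conjI impI ballI)
  assume h: "coll_hom C X X' f \<and> coll_hom C Y Y' g"
  show "coll_hom C (coll_tensor C X Y) (coll_tensor C X' Y') (tensor_hom f g)"
    unfolding coll_hom_def
  proof
    fix t assume t: "t \<in> fst (coll_tensor C X Y)"
    obtain x \<phi> ys where td: "t = (x, \<phi>, ys)" by (cases t) auto
    show "tensor_hom f g t \<in> fst (coll_tensor C X' Y') \<and>
         snd (coll_tensor C X' Y') (tensor_hom f g t) = snd (coll_tensor C X Y) t"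
      using t h unfolding td by (auto simp: tensor_mem tensor_hom_def coll_hom_def)
  qed
next
  fix t
  show "tensor_hom id id t = t" by (cases t) (simp add: tensor_hom_def)
next
  fix t
  show "tensor_hom (f' \<circ> f) (g' \<circ> g) t = tensor_hom f' g' (tensor_hom f g t)"
    by (cases t) (simp add: tensor_hom_def)
qed

lemma natural:
  assumes C: "opcat C"
  shows "coll_skew_natural C X X' Y Y' Z Z' f g h"
  unfolding coll_skew_natural_def
proof (intro impI conjI ballI)
  assume hs: "coll_hom C X X' f \<and> coll_hom C Y Y' g \<and> coll_hom C Z Z' h"
  {
    fix t assume t: "t \<in> fst (coll_tensor C (coll_tensor C X Y) Z)"
    obtain x \<psi> ys \<phi> zs where td: "t = ((x, \<psi>, ys), \<phi>, zs)" by (cases t) auto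
    from t[unfolded td] have phi: "\<phi> \<in> Arr C" and psi: "\<psi> \<in> Arr C"
      and pc: "Dom C \<psi> = Cod C \<phi>" and ys: "length ys = Card C (Cod C \<psi>)"
      and zs: "length zs = Card C (Cod C \<phi>)"
      by (auto simp: tensor_mem)
    have "map (\<lambda>j. (map g ys ! j, Fibm C \<phi> \<psi> j,
                 map (\<lambda>r. map h zs ! sfib_elem (Fmap C \<psi>) (Card C (Dom C \<psi>)) j r)
                     [0..<Card C (Fib C \<psi> j)])) [0..<Card C (Cod C \<psi>)] =
          map (tensor_hom g h) (map (\<lambda>j. (ys ! j, Fibm C \<phi> \<psi> j,
                 map (\<lambda>r. zs ! sfib_elem (Fmap C \<psi>) (Card C (Dom C \<psi>)) j r)
                     [0..<Card C (Fib C \<psi> j)])) [0..<Card C (Cod C \<psi>)])"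
    proof (rule nth_equalityI)
      fix j assume "j < length (map (\<lambda>j. (map g ys ! j, Fibm C \<phi> \<psi> j,
                 map (\<lambda>r. map h zs ! sfib_elem (Fmap C \<psi>) (Card C (Dom C \<psi>)) j r)
                     [0..<Card C (Fib C \<psi> j)])) [0..<Card C (Cod C \<psi>)])"
      then have j: "j < Card C (Cod C \<psi>)" by simp
      have "\<And>r. r < Card C (Fib C \<psi> j) \<Longrightarrow> sfib_elem (Fmap C \<psi>) (Card C (Dom C \<psi>)) j r < length zs"
        using arr_sfib[OF C psi j] pc zs by auto
      then show "map (\<lambda>j. (map g ys ! j, Fibm C \<phi> \<psi> j,
                 map (\<lambda>r. map h zs ! sfib_elem (Fmap C \<psi>) (Card C (Dom C \<psi>)) j r)
                     [0..<Card C (Fib C \<psi> j)])) [0..<Card C (Cod C \<psi>)] ! j =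
          map (tensor_hom g h) (map (\<lambda>j. (ys ! j, Fibm C \<phi> \<psi> j,
                 map (\<lambda>r. zs ! sfib_elem (Fmap C \<psi>) (Card C (Dom C \<psi>)) j r)
                     [0..<Card C (Fib C \<psi> j)])) [0..<Card C (Cod C \<psi>)]) ! j"
        using j ys by (simp add: tensor_hom_def)
    qed simp
    then show "coll_alpha C (tensor_hom (tensor_hom f g) h t) = tensor_hom f (tensor_hom g h) (coll_alpha C t)"
      unfolding td by (simp add: coll_alpha_def tensor_hom_def)
  }
  {
    fix t assume t: "t \<in> fst (coll_tensor C (coll_unit C) X)"
    obtain u \<phi> xs where td: "t = (u, \<phi>, xs)" by (cases t) auto
    from t[unfolded td] have "length xs = Card C (Cod C \<phi>)" "trivial C (Cod C \<phi>)"
      by (auto simp: tensor_mem)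
    then have "length xs = 1" using triv_D by metis
    then show "coll_lambda (tensor_hom id f t) = f (coll_lambda t)"
      unfolding td by (simp add: coll_lambda_def tensor_hom_def)
  }
  {
    fix x assume x: "x \<in> fst X"
    then have "snd X' (f x) = snd X x" using hs by (simp add: coll_hom_def)
    then show "coll_rho C X' (f x) = tensor_hom f id (coll_rho C X x)"
      by (simp add: coll_rho_def tensor_hom_def)
  }
qed



context
  fixes C :: "('o, 'm) opcat" and D :: "('o2, 'm2) opcat" and F
  assumes F: "strict_opfunctor C D F"
begin
lemma sf_obj: "c \<in> Obj C \<Longrightarrow> fst F c \<in> Obj D" using F unfolding strict_opfunctor_def by blast
lemma sf_arr: "f \<in> Arr C \<Longrightarrow> snd F f \<in> Arr D" using F unfolding strict_opfunctor_def by blast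
lemma sf_dc: "f \<in> Arr C \<Longrightarrow> Dom D (snd F f) = fst F (Dom C f) \<and> Cod D (snd F f) = fst F (Cod C f)"
  using F unfolding strict_opfunctor_def by blast
lemma sf_id: "c \<in> Obj C \<Longrightarrow> snd F (Idt C c) = Idt D (fst F c)" using F unfolding strict_opfunctor_def by blast
lemma sf_comp: "f \<in> Arr C \<Longrightarrow> g \<in> Arr C \<Longrightarrow> Cod C f = Dom C g \<Longrightarrow> snd F (Comp C g f) = Comp D (snd F g) (snd F f)"
  using F unfolding strict_opfunctor_def by blast
lemma sf_card: "c \<in> Obj C \<Longrightarrow> Card D (fst F c) = Card C c" using F unfolding strict_opfunctor_def by blast
lemma sf_fmap: "f \<in> Arr C \<Longrightarrow> k < Card C (Dom C f) \<Longrightarrow> Fmap D (snd F f) k = Fmap C f k"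
  using F unfolding strict_opfunctor_def by blast
lemma sf_fib: "f \<in> Arr C \<Longrightarrow> i < Card C (Cod C f) \<Longrightarrow> Fib D (snd F f) i = fst F (Fib C f i)"
  using F unfolding strict_opfunctor_def by blast
lemma sf_fibm: "h \<in> Arr C \<Longrightarrow> g \<in> Arr C \<Longrightarrow> Cod C h = Dom C g \<Longrightarrow> i < Card C (Cod C g) \<Longrightarrow>
        Fibm D (snd F h) (snd F g) i = snd F (Fibm C h g i)"
  using F unfolding strict_opfunctor_def by blast
end

lemma opmon:
  assumes C: "opcat C" and D: "opcat D" and F: "strict_opfunctor C D F"
    and X: "is_coll C X"
  shows "coll_opmonoidal C D F X X' Y Y' Z f g"
  unfolding coll_opmonoidal_def
proof (intro conjI impI ballI)
  show "is_coll D (coll_push F X)" using X sf_obj[OF F] by (auto simp: is_coll_def coll_push_def)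
next
  assume "coll_hom C X X' f"
  then show "coll_hom D (coll_push F X) (coll_push F X') f" by (simp add: coll_hom_def coll_push_def)
next
  show "coll_hom D (coll_push F (coll_tensor C X Y)) (coll_tensor D (coll_push F X) (coll_push F Y)) (coll_F2 F)"
    unfolding coll_hom_def
  proof
    fix t assume t: "t \<in> fst (coll_push F (coll_tensor C X Y))"
    obtain x \<phi> ys where td: "t = (x, \<phi>, ys)" by (cases t) auto
    from t td have phi: "\<phi> \<in> Arr C" and x: "x \<in> fst X" "snd X x = Cod C \<phi>"
      and ys: "length ys = Card C (Cod C \<phi>)" "\<forall>i<length ys. ys ! i \<in> fst Y \<and> snd Y (ys ! i) = Fib C \<phi> i"
      by (auto simp: coll_push_def tensor_mem)
    have cc: "Card D (Cod D (snd F \<phi>)) = Card C (Cod C \<phi>)"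
      using sf_dc[OF F phi] sf_card[OF F] cat_dc[OF C phi] by simp
    have "(x, snd F \<phi>, ys) \<in> fst (coll_tensor D (coll_push F X) (coll_push F Y))"
      apply (rule tensor_mem[THEN iffD2])
      using sf_arr[OF F phi] x ys cc sf_dc[OF F phi] sf_fib[OF F phi] by (simp add: coll_push_def)
    then show "coll_F2 F t \<in> fst (coll_tensor D (coll_push F X) (coll_push F Y)) \<and>
         snd (coll_tensor D (coll_push F X) (coll_push F Y)) (coll_F2 F t) = snd (coll_push F (coll_tensor C X Y)) t"
      using td sf_dc[OF F phi] by (simp add: coll_F2_def coll_push_def)
  qed
next
  show "coll_hom D (coll_push F (coll_unit C)) (coll_unit D) (coll_F0 F)"
    unfolding coll_hom_def
  proof
    fix u assume "u \<in> fst (coll_push F (coll_unit C))"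
    then have u: "trivial C u" by (simp add: coll_push_def)
    have u1: "u \<in> Obj C" "Card C u = 1" using triv_D[OF u] by auto
    have i: "Idt C u \<in> Arr C" "Dom C (Idt C u) = u" "Cod C (Idt C u) = u" using cat_id[OF C u1(1)] by auto
    have "Fib C (Idt C u) 0 = u" using triv_fib[OF u i(1) i(3)] i(2) by simp
    then have "fst F u = Fib D (Idt D (fst F u)) 0"
      using sf_fib[OF F i(1)] sf_id[OF F u1(1)] i u1 by simp
    moreover have "trivial D (Fib D (Idt D (fst F u)) 0)"
      using triv_id[OF D sf_obj[OF F u1(1)]] sf_card[OF F u1(1)] u1 by simp
    ultimately show "coll_F0 F u \<in> fst (coll_unit D) \<and> snd (coll_unit D) (coll_F0 F u) = snd (coll_push F (coll_unit C)) u"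
      by (simp add: coll_F0_def coll_push_def)
  qed
next
  fix t show "coll_F2 F (tensor_hom f g t) = tensor_hom f g (coll_F2 F t)"
    by (cases t) (simp add: coll_F2_def tensor_hom_def)
next
  fix t assume t: "t \<in> fst (coll_tensor C (coll_tensor C X Y) Z)"
  obtain x \<psi> ys \<phi> zs where td: "t = ((x, \<psi>, ys), \<phi>, zs)" by (cases t) auto
  from t[unfolded td] have phi: "\<phi> \<in> Arr C" and psi: "\<psi> \<in> Arr C"
    and pc: "Dom C \<psi> = Cod C \<phi>"
    by (auto simp: tensor_mem)
  have dpsi: "Dom C \<psi> \<in> Obj C" "Cod C \<psi> \<in> Obj C" using cat_dc[OF C psi] by auto
  have e1: "Comp D (snd F \<psi>) (snd F \<phi>) = snd F (Comp C \<psi> \<phi>)" using sf_comp[OF F phi psi pc[symmetric]] by simp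
  have e2: "Card D (Cod D (snd F \<psi>)) = Card C (Cod C \<psi>)" "Card D (Dom D (snd F \<psi>)) = Card C (Dom C \<psi>)"
    using sf_dc[OF F psi] sf_card[OF F] dpsi by simp_all
  have e3: "\<And>j. j < Card C (Cod C \<psi>) \<Longrightarrow> Fibm D (snd F \<phi>) (snd F \<psi>) j = snd F (Fibm C \<phi> \<psi> j)"
    using sf_fibm[OF F phi psi pc[symmetric]] by simp
  have e4: "\<And>j. j < Card C (Cod C \<psi>) \<Longrightarrow> Card D (Fib D (snd F \<psi>) j) = Card C (Fib C \<psi> j)"
    using sf_fib[OF F psi] sf_card[OF F] ff_obj[OF C psi] by simp
  have e5: "\<And>j r. sfib_elem (Fmap D (snd F \<psi>)) (Card C (Dom C \<psi>)) j r = sfib_elem (Fmap C \<psi>) (Card C (Dom C \<psi>)) j r"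
    using F4(1) sf_fmap[OF F psi] by blast
  show "coll_alpha D (tensor_hom (coll_F2 F) id (coll_F2 F t)) = tensor_hom id (coll_F2 F) (coll_F2 F (coll_alpha C t))"
    unfolding td using e1 e2 e3 e4 e5
    by (simp add: coll_alpha_def coll_F2_def tensor_hom_def)
next
  fix t show "coll_lambda (tensor_hom (coll_F0 F) id (coll_F2 F t)) = coll_lambda t"
    by (cases t) (simp add: coll_F2_def tensor_hom_def coll_lambda_def)
next
  fix x assume x: "x \<in> fst X"
  then have c: "snd X x \<in> Obj C" using X by (auto simp: is_coll_def)
  have i: "Idt C (snd X x) \<in> Arr C" "Cod C (Idt C (snd X x)) = snd X x" using cat_id[OF C c] by auto
  have "map (fst F \<circ> Fib C (Idt C (snd X x))) [0..<Card C (snd X x)] =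
        map (Fib D (Idt D (fst F (snd X x)))) [0..<Card C (snd X x)]"
    using sf_fib[OF F i(1)] i(2) sf_id[OF F c] by simp
  then show "tensor_hom id (coll_F0 F) (coll_F2 F (coll_rho C X x)) = coll_rho D (coll_push F X) x"
    using sf_id[OF F c] sf_card[OF F c]
    by (simp add: coll_rho_def coll_F2_def coll_F0_def tensor_hom_def coll_push_def)
qed



definition Pu :: "('o, 'm) opcat \<Rightarrow> bool" where
  "Pu C \<longleftrightarrow> (\<forall>c\<in>Obj C. \<exists>!\<phi>. \<phi> \<in> Arr C \<and> Dom C \<phi> = c \<and> trivial C (Cod C \<phi>))"

lemma lambda_hom': "coll_hom C (coll_tensor C (coll_unit C) X) X coll_lambda"
  unfolding coll_hom_def
proof
  fix t assume t: "t \<in> fst (coll_tensor C (coll_unit C) X)"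
  obtain u \<phi> xs where td: "t = (u, \<phi>, xs)" by (cases t) auto
  have u: "trivial C u" "Cod C \<phi> = u" "\<phi> \<in> Arr C" using t td by (auto simp: tensor_mem)
  have m: "\<phi> \<in> Arr C \<and> u \<in> fst (coll_unit C) \<and> snd (coll_unit C) u = Cod C \<phi> \<and> length xs = Card C (Cod C \<phi>) \<and>
          (\<forall>i < length xs. xs ! i \<in> fst X \<and> snd X (xs ! i) = Fib C \<phi> i)"
    using t[unfolded td tensor_mem] .
  then have l: "length xs = 1" using triv_D[OF u(1)] u(2) by simp
  have "xs ! 0 \<in> fst X \<and> snd X (xs ! 0) = Fib C \<phi> 0" using m l by simp
  then show "coll_lambda t \<in> fst X \<and> snd X (coll_lambda t) = snd (coll_tensor C (coll_unit C) X) t"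
    using td triv_fib[OF u(1) u(3) u(2)] by (simp add: coll_lambda_def)
qed

lemma single_mem:
  assumes "\<phi> \<in> Arr C" "trivial C (Cod C \<phi>)" "y \<in> fst X" "snd X y = Dom C \<phi>"
  shows "(Cod C \<phi>, \<phi>, [y]) \<in> fst (coll_tensor C (coll_unit C) X)"
  using assms triv_D[OF assms(2)] triv_fib[OF assms(2) assms(1) refl] by (simp add: tensor_mem)

lemma iso_to_Pu:
  assumes C: "opcat C"
    and H: "\<forall>X::('a, 'o) coll. is_coll C X \<longrightarrow> coll_iso C (coll_tensor C (coll_unit C) X) X coll_lambda"
  shows "Pu (C :: ('o, 'm) opcat)"
  unfolding Pu_def
proof
  fix c assume c: "c \<in> Obj C"
  define x0 :: 'a where "x0 = undefined"
  define X :: "('a, 'o) coll" where "X = ({x0}, \<lambda>_. c)"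
  have "is_coll C X" using c by (simp add: X_def is_coll_def)
  then obtain g where g: "coll_hom C X (coll_tensor C (coll_unit C) X) g"
    "\<forall>t\<in>fst (coll_tensor C (coll_unit C) X). g (coll_lambda t) = t"
    using H unfolding coll_iso_def by blast
  have gx: "g x0 \<in> fst (coll_tensor C (coll_unit C) X)" "snd (coll_tensor C (coll_unit C) X) (g x0) = c"
    using g(1) by (auto simp: coll_hom_def X_def)
  obtain u \<phi> xs where gd: "g x0 = (u, \<phi>, xs)" by (cases "g x0") auto
  have ex: "\<phi> \<in> Arr C \<and> Dom C \<phi> = c \<and> trivial C (Cod C \<phi>)"
    using gx gd by (auto simp: tensor_mem)
  have un: "\<psi> = \<phi>" if \<psi>: "\<psi> \<in> Arr C \<and> Dom C \<psi> = c \<and> trivial C (Cod C \<psi>)" for \<psi>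
  proof -
    have m: "(Cod C \<psi>, \<psi>, [x0]) \<in> fst (coll_tensor C (coll_unit C) X)"
      using single_mem[of \<psi> C x0 X] \<psi> by (simp add: X_def)
    then have "g (coll_lambda (Cod C \<psi>, \<psi>, [x0])) = (Cod C \<psi>, \<psi>, [x0])" using g(2) by blast
    then have "g x0 = (Cod C \<psi>, \<psi>, [x0])" by (simp add: coll_lambda_def)
    then show ?thesis using gd by simp
  qed
  show "\<exists>!\<phi>. \<phi> \<in> Arr C \<and> Dom C \<phi> = c \<and> trivial C (Cod C \<phi>)" using ex un by blast
qed

lemma Pu_to_iso:
  assumes C: "opcat C" and P: "Pu C" and X: "is_coll C X"
  shows "coll_iso C (coll_tensor C (coll_unit C) X) X coll_lambda"
proof -
  define ph where "ph = (\<lambda>c. THE \<phi>. \<phi> \<in> Arr C \<and> Dom C \<phi> = c \<and> trivial C (Cod C \<phi>))"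
  have ex1: "\<And>c. c \<in> Obj C \<Longrightarrow> \<exists>!\<phi>. \<phi> \<in> Arr C \<and> Dom C \<phi> = c \<and> trivial C (Cod C \<phi>)"
    using P unfolding Pu_def by blast
  have phP: "ph c \<in> Arr C \<and> Dom C (ph c) = c \<and> trivial C (Cod C (ph c))" if c: "c \<in> Obj C" for c
    unfolding ph_def by (rule theI'[OF ex1[OF c]])
  have phU: "\<phi> = ph c" if c: "c \<in> Obj C" and "\<phi> \<in> Arr C" "Dom C \<phi> = c" "trivial C (Cod C \<phi>)" for c \<phi>
    unfolding ph_def by (rule the1_equality[OF ex1[OF c], symmetric]) (use that in blast)
  define g where "g = (\<lambda>y. (Cod C (ph (snd X y)), ph (snd X y), [y]))"
  have gh: "coll_hom C X (coll_tensor C (coll_unit C) X) g"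
    unfolding coll_hom_def
  proof
    fix y assume y: "y \<in> fst X"
    then have c: "snd X y \<in> Obj C" using X by (auto simp: is_coll_def)
    show "g y \<in> fst (coll_tensor C (coll_unit C) X) \<and> snd (coll_tensor C (coll_unit C) X) (g y) = snd X y"
      using single_mem[of "ph (snd X y)" C y X] phP[OF c] y by (simp add: g_def)
  qed
  have gl: "\<forall>t\<in>fst (coll_tensor C (coll_unit C) X). g (coll_lambda t) = t"
  proof
    fix t assume t: "t \<in> fst (coll_tensor C (coll_unit C) X)"
    obtain u \<phi> xs where td: "t = (u, \<phi>, xs)" by (cases t) auto
    have m0: "\<phi> \<in> Arr C \<and> trivial C u \<and> u = Cod C \<phi> \<and> length xs = Card C (Cod C \<phi>) \<and>
          (\<forall>i < length xs. xs ! i \<in> fst X \<and> snd X (xs ! i) = Fib C \<phi> i)"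
      using t[unfolded td tensor_mem unit_fst unit_snd mem_Collect_eq] .
    have ue: "u = Cod C \<phi>" "trivial C u" using m0 by blast+
    have m: "\<phi> \<in> Arr C \<and> trivial C (Cod C \<phi>) \<and> u = Cod C \<phi> \<and> length xs = Card C (Cod C \<phi>) \<and>
          (\<forall>i < length xs. xs ! i \<in> fst X \<and> snd X (xs ! i) = Fib C \<phi> i)"
      using m0 ue by simp
    then have l: "length xs = 1" using triv_D by metis
    then have xs: "xs = [xs ! 0]" by (cases xs) auto
    have y: "xs ! 0 \<in> fst X" "snd X (xs ! 0) = Dom C \<phi>"
      using m l triv_fib[of C "Cod C \<phi>" \<phi>] by auto
    have pa: "\<phi> \<in> Arr C" "trivial C (Cod C \<phi>)" using m by blast+
    have co: "snd X (xs ! 0) \<in> Obj C" using y(2) cat_dc[OF C pa(1)] by simp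
    have "\<phi> = ph (snd X (xs ! 0))" by (rule phU[OF co pa(1) y(2)[symmetric] pa(2)])
    then show "g (coll_lambda t) = t" using td m xs by (simp add: g_def coll_lambda_def)
  qed
  have lg: "\<forall>y\<in>fst X. coll_lambda (g y) = y" by (simp add: g_def coll_lambda_def)
  show ?thesis unfolding coll_iso_def using lambda_hom' gh gl lg by blast
qed

lemma Pu_genuine:
  assumes C: "opcat C"
  shows "genuine C \<longleftrightarrow> Pu C"
proof
  assume G: "genuine C"
  show "Pu C" unfolding Pu_def
  proof
    fix c assume c: "c \<in> Obj C"
    obtain u where u: "trivial C u" "connected C c u" "\<And>u'. trivial C u' \<and> connected C c u' \<Longrightarrow> u' = u"
      using G c unfolding genuine_def by metis
    obtain f where f: "f \<in> Arr C" "Dom C f = c" "Cod C f = u"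
      "\<And>f'. f' \<in> Arr C \<and> Dom C f' = c \<and> Cod C f' = u \<Longrightarrow> f' = f"
      using G u(1,2) unfolding genuine_def by metis
    have "\<psi> = f" if \<psi>: "\<psi> \<in> Arr C" "Dom C \<psi> = c" "trivial C (Cod C \<psi>)" for \<psi>
    proof -
      have "(c, Cod C \<psi>) \<in> arr_rel C" using \<psi> unfolding arr_rel_def by auto
      then have "connected C c (Cod C \<psi>)" using c triv_D[OF \<psi>(3)] unfolding connected_def by auto
      then have "Cod C \<psi> = u" using u(3) \<psi>(3) by blast
      then show ?thesis using f(4) \<psi> by blast
    qed
    then show "\<exists>!\<phi>. \<phi> \<in> Arr C \<and> Dom C \<phi> = c \<and> trivial C (Cod C \<phi>)" using f u(1) by blast
  qed
next
  assume P: "Pu C"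
  define ph where "ph = (\<lambda>c. THE \<phi>. \<phi> \<in> Arr C \<and> Dom C \<phi> = c \<and> trivial C (Cod C \<phi>))"
  have ex1: "\<And>c. c \<in> Obj C \<Longrightarrow> \<exists>!\<phi>. \<phi> \<in> Arr C \<and> Dom C \<phi> = c \<and> trivial C (Cod C \<phi>)"
    using P unfolding Pu_def by blast
  have phP: "ph c \<in> Arr C \<and> Dom C (ph c) = c \<and> trivial C (Cod C (ph c))" if c: "c \<in> Obj C" for c
    unfolding ph_def by (rule theI'[OF ex1[OF c]])
  have phU: "\<phi> = ph c" if c: "c \<in> Obj C" and "\<phi> \<in> Arr C" "Dom C \<phi> = c" "trivial C (Cod C \<phi>)" for c \<phi>
    unfolding ph_def by (rule the1_equality[OF ex1[OF c], symmetric]) (use that in blast)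
  define tau where "tau = (\<lambda>c. Cod C (ph c))"
  have step: "tau (Dom C g) = tau (Cod C g)" if g: "g \<in> Arr C" for g
  proof -
    have o: "Dom C g \<in> Obj C" "Cod C g \<in> Obj C" using cat_dc[OF C g] by auto
    have pb: "ph (Cod C g) \<in> Arr C" "Dom C (ph (Cod C g)) = Cod C g" "trivial C (Cod C (ph (Cod C g)))"
      using phP[OF o(2)] by auto
    have cg: "Comp C (ph (Cod C g)) g \<in> Arr C \<and> Dom C (Comp C (ph (Cod C g)) g) = Dom C g \<and>
              Cod C (Comp C (ph (Cod C g)) g) = Cod C (ph (Cod C g))"
      using cat_comp[OF C g pb(1) pb(2)[symmetric]] .
    then have "Comp C (ph (Cod C g)) g = ph (Dom C g)" using phU[OF o(1)] pb(3) by auto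
    then show ?thesis using cg unfolding tau_def by metis
  qed
  have conn: "tau a = tau b" if "connected C a b" for a b
  proof -
    have "(a, b) \<in> (arr_rel C \<union> (arr_rel C)\<inverse>)\<^sup>*" using that unfolding connected_def by blast
    then show ?thesis
    proof (induction rule: rtrancl_induct)
      case base then show ?case by simp
    next
      case (step y z)
      then show ?case unfolding arr_rel_def using step by auto (metis \<open>\<And>g. g \<in> Arr C \<Longrightarrow> tau (Dom C g) = tau (Cod C g)\<close>)+
    qed
  qed
  have tt: "tau u = u" if u: "trivial C u" for u
  proof -
    have u1: "u \<in> Obj C" using triv_D[OF u] by simp
    have i: "Idt C u \<in> Arr C" "Dom C (Idt C u) = u" "Cod C (Idt C u) = u" using cat_id[OF C u1] by auto
    then have "Idt C u = ph u" using phU[OF u1] u by simp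
    then show ?thesis using i tau_def by simp
  qed
  have cT: "connected C c (tau c)" "trivial C (tau c)" if c: "c \<in> Obj C" for c
  proof -
    show tr: "trivial C (tau c)" using phP[OF c] tau_def by simp
    have "(c, tau c) \<in> arr_rel C" using phP[OF c] unfolding arr_rel_def tau_def by force
    then show "connected C c (tau c)" using c triv_D[OF tr] unfolding connected_def by auto
  qed
  show "genuine C" unfolding genuine_def
  proof (intro conjI ballI allI impI)
    fix c assume c: "c \<in> Obj C"
    show "\<exists>!u. trivial C u \<and> connected C c u"
    proof (rule ex1I[of _ "tau c"])
      show "trivial C (tau c) \<and> connected C c (tau c)" using cT[OF c] by simp
    next
      fix u assume "trivial C u \<and> connected C c u"
      then show "u = tau c" using conn tt by metis
    qed
  next
    fix u c assume uc: "trivial C u \<and> connected C c u"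
    then have c: "c \<in> Obj C" unfolding connected_def by blast
    have ut: "u = tau c" using uc conn tt by metis
    show "\<exists>!f. f \<in> Arr C \<and> Dom C f = c \<and> Cod C f = u"
    proof (rule ex1I[of _ "ph c"])
      show "ph c \<in> Arr C \<and> Dom C (ph c) = c \<and> Cod C (ph c) = u" using phP[OF c] ut tau_def by simp
    next
      fix f assume "f \<in> Arr C \<and> Dom C f = c \<and> Cod C f = u"
      then show "f = ph c" using phU[OF c] uc by metis
    qed
  qed
qed

lemma genuine_iff:
  assumes C: "opcat C"
  shows "genuine C \<longleftrightarrow> (\<forall>X::('a, 'o) coll. is_coll C X \<longrightarrow> coll_iso C (coll_tensor C (coll_unit C) X) X coll_lambda)"
  using Pu_genuine[OF C] iso_to_Pu[OF C] Pu_to_iso[OF C] by blast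


lemma skew_all:
  assumes C: "opcat C" and X: "is_coll C X"
  shows "coll_skew_axioms C W X Y Z"
  unfolding coll_skew_axioms_def
proof (intro conjI ballI)
  show "is_coll C (coll_tensor C X Y)" by (rule tensor_coll[OF C])
  show "is_coll C (coll_unit C)" by (rule unit_coll)
  show "coll_hom C (coll_tensor C (coll_tensor C X Y) Z) (coll_tensor C X (coll_tensor C Y Z)) (coll_alpha C)"
    by (rule alpha_hom[OF C])
  show "coll_hom C (coll_tensor C (coll_unit C) X) X coll_lambda" by (rule lambda_hom)
  show "coll_hom C X (coll_tensor C X (coll_unit C)) (coll_rho C X)" by (rule rho_hom[OF C X])
next
  fix u assume "u \<in> fst (coll_unit C)"
  then show "coll_lambda (coll_rho C (coll_unit C) u) = u" using ax_lr[OF C] by simp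
next
  fix t assume t: "t \<in> fst (coll_tensor C (coll_tensor C (coll_unit C) X) Y)"
  obtain u \<psi> xs \<phi> ys where td: "t = ((u, \<psi>, xs), \<phi>, ys)" by (cases t) auto
  show "coll_lambda (coll_alpha C t) = tensor_hom coll_lambda id t"
    unfolding td by (rule ax_lalpha[OF C t[unfolded td]])
next
  fix t assume t: "t \<in> fst (coll_tensor C X Y)"
  obtain x \<phi> ys where td: "t = (x, \<phi>, ys)" by (cases t) auto
  show "coll_alpha C (coll_rho C (coll_tensor C X Y) t) = tensor_hom id (coll_rho C Y) t"
    unfolding td by (rule ax_arho[OF C t[unfolded td]])
next
  fix t assume t: "t \<in> fst (coll_tensor C X Y)"
  obtain x \<phi> ys where td: "t = (x, \<phi>, ys)" by (cases t) auto
  show "tensor_hom id coll_lambda (coll_alpha C (tensor_hom (coll_rho C X) id t)) = t"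
    unfolding td by (rule ax_lar[OF C X t[unfolded td]])
next
  fix t assume t: "t \<in> fst (coll_tensor C (coll_tensor C (coll_tensor C W X) Y) Z)"
  obtain w \<chi> xs \<psi> ys \<phi> zs where td: "t = (((w, \<chi>, xs), \<psi>, ys), \<phi>, zs)" by (cases t) auto
  show "coll_alpha C (coll_alpha C t) =
        tensor_hom id (coll_alpha C) (coll_alpha C (tensor_hom (coll_alpha C) id t))"
    unfolding td by (rule ax_pent[OF C t[unfolded td]])
qed

theorem theorem5p1:
  shows
  "\<comment> \<open>Coll_C(Set) is a skew monoidal category, for every operadic category C\<close>
   (\<forall>(C::('o, 'm) opcat) (W::('w, 'o) coll) (X::('a, 'o) coll) (Y::('b, 'o) coll) (Z::('c, 'o) coll).
      opcat C \<and> is_coll C W \<and> is_coll C X \<and> is_coll C Y \<and> is_coll C Z \<longrightarrow>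
      coll_skew_axioms C W X Y Z) \<and>
   (\<forall>(C::('o, 'm) opcat) (X::('a, 'o) coll) (X'::('a2, 'o) coll) (X''::('a3, 'o) coll)
       (Y::('b, 'o) coll) (Y'::('b2, 'o) coll) (Y''::('b3, 'o) coll) f f' g g'.
      opcat C \<and> is_coll C X \<and> is_coll C X' \<and> is_coll C X'' \<and>
      is_coll C Y \<and> is_coll C Y' \<and> is_coll C Y'' \<longrightarrow>
      coll_tensor_functorial C X X' X'' Y Y' Y'' f f' g g') \<and>
   (\<forall>(C::('o, 'm) opcat) (X::('a, 'o) coll) (X'::('a2, 'o) coll) (Y::('b, 'o) coll)
       (Y'::('b2, 'o) coll) (Z::('c, 'o) coll) (Z'::('c2, 'o) coll) f g h.
      opcat C \<and> is_coll C X \<and> is_coll C X' \<and> is_coll C Y \<and> is_coll C Y' \<and>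
      is_coll C Z \<and> is_coll C Z' \<longrightarrow>
      coll_skew_natural C X X' Y Y' Z Z' f g h) \<and>
   \<comment> \<open>Coll(F) = F_! is an opmonoidal functor for every strict operadic functor F\<close>
   (\<forall>(C::('o, 'm) opcat) (D::('o2, 'm2) opcat) F (X::('a, 'o) coll) (X'::('a2, 'o) coll)
       (Y::('b, 'o) coll) (Y'::('b2, 'o) coll) (Z::('c, 'o) coll) f g.
      opcat C \<and> opcat D \<and> strict_opfunctor C D F \<and>
      is_coll C X \<and> is_coll C X' \<and> is_coll C Y \<and> is_coll C Y' \<and> is_coll C Z \<longrightarrow>
      coll_opmonoidal C D F X X' Y Y' Z f g) \<and>
   \<comment> \<open>Coll preserves identities and composition\<close>
   (\<forall>X::('a, 'o) coll. coll_push (opfun_id :: ('o \<Rightarrow> 'o) \<times> ('m \<Rightarrow> 'm)) X = X) \<and>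
   (\<forall>t::'a \<times> 'm \<times> 'b list. coll_F2 (opfun_id :: ('o \<Rightarrow> 'o) \<times> ('m \<Rightarrow> 'm)) t = t) \<and>
   (\<forall>u::'o. coll_F0 (opfun_id :: ('o \<Rightarrow> 'o) \<times> ('m \<Rightarrow> 'm)) u = u) \<and>
   (\<forall>(G::('o2 \<Rightarrow> 'o3) \<times> ('m2 \<Rightarrow> 'm3)) (F::('o \<Rightarrow> 'o2) \<times> ('m \<Rightarrow> 'm2)) (X::('a, 'o) coll).
      coll_push (opfun_comp G F) X = coll_push G (coll_push F X)) \<and>
   (\<forall>(G::('o2 \<Rightarrow> 'o3) \<times> ('m2 \<Rightarrow> 'm3)) (F::('o \<Rightarrow> 'o2) \<times> ('m \<Rightarrow> 'm2)) (t::'a \<times> 'm \<times> 'b list).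
      coll_F2 (opfun_comp G F) t = coll_F2 G (coll_F2 F t)) \<and>
   (\<forall>(G::('o2 \<Rightarrow> 'o3) \<times> ('m2 \<Rightarrow> 'm3)) (F::('o \<Rightarrow> 'o2) \<times> ('m \<Rightarrow> 'm2)) (u::'o).
      coll_F0 (opfun_comp G F) u = coll_F0 G (coll_F0 F u)) \<and>
   \<comment> \<open>C is genuine iff lambda is invertible\<close>
   (\<forall>C::('o, 'm) opcat. opcat C \<longrightarrow>
      (genuine C \<longleftrightarrow>
        (\<forall>X::('a, 'o) coll. is_coll C X \<longrightarrow>
           coll_iso C (coll_tensor C (coll_unit C) X) X coll_lambda)))"
  proof (intro conjI allI impI)
  show "\<And>C W X Y Z. opcat C \<and> is_coll C W \<and> is_coll C X \<and> is_coll C Y \<and> is_coll C Z \<Longrightarrow>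
      coll_skew_axioms C W X Y Z" using skew_all by blast
next
  fix C X X' X'' Y Y' Y'' f f' g g'
  show "coll_tensor_functorial C X X' X'' Y Y' Y'' f f' g g'" by (rule functorial)
next
  fix C X X' Y Y' Z Z' f g h
  assume "opcat C \<and> is_coll C X \<and> is_coll C X' \<and> is_coll C Y \<and> is_coll C Y' \<and> is_coll C Z \<and> is_coll C Z'"
  then show "coll_skew_natural C X X' Y Y' Z Z' f g h" using natural by blast
next
  fix C D F X X' Y Y' Z f g
  assume "opcat C \<and> opcat D \<and> strict_opfunctor C D F \<and>
      is_coll C X \<and> is_coll C X' \<and> is_coll C Y \<and> is_coll C Y' \<and> is_coll C Z"
  then show "coll_opmonoidal C D F X X' Y Y' Z f g" using opmon by blast
next
  fix X :: "('a, 'o) coll"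
  show "coll_push (opfun_id :: ('o \<Rightarrow> 'o) \<times> ('m \<Rightarrow> 'm)) X = X"
    by (cases X) (simp add: coll_push_def opfun_id_def o_def)
next
  fix t :: "'a \<times> 'm \<times> 'b list"
  show "coll_F2 (opfun_id :: ('o \<Rightarrow> 'o) \<times> ('m \<Rightarrow> 'm)) t = t"
    by (cases t) (simp add: coll_F2_def opfun_id_def)
next
  fix u :: 'o
  show "coll_F0 (opfun_id :: ('o \<Rightarrow> 'o) \<times> ('m \<Rightarrow> 'm)) u = u"
    by (simp add: coll_F0_def opfun_id_def)
next
  fix G :: "('o2 \<Rightarrow> 'o3) \<times> ('m2 \<Rightarrow> 'm3)" and F :: "('o \<Rightarrow> 'o2) \<times> ('m \<Rightarrow> 'm2)" and X :: "('a, 'o) coll"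
  show "coll_push (opfun_comp G F) X = coll_push G (coll_push F X)"
    by (simp add: coll_push_def opfun_comp_def o_assoc)
next
  fix G :: "('o2 \<Rightarrow> 'o3) \<times> ('m2 \<Rightarrow> 'm3)" and F :: "('o \<Rightarrow> 'o2) \<times> ('m \<Rightarrow> 'm2)" and t :: "'a \<times> 'm \<times> 'b list"
  show "coll_F2 (opfun_comp G F) t = coll_F2 G (coll_F2 F t)"
    by (cases t) (simp add: coll_F2_def opfun_comp_def)
next
  fix G :: "('o2 \<Rightarrow> 'o3) \<times> ('m2 \<Rightarrow> 'm3)" and F :: "('o \<Rightarrow> 'o2) \<times> ('m \<Rightarrow> 'm2)" and u :: 'o
  show "coll_F0 (opfun_comp G F) u = coll_F0 G (coll_F0 F u)"
    by (simp add: coll_F0_def opfun_comp_def)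
next
  fix C :: "('o, 'm) opcat"
  assume "opcat C"
  then show "genuine C \<longleftrightarrow> (\<forall>X::('a, 'o) coll. is_coll C X \<longrightarrow>
           coll_iso C (coll_tensor C (coll_unit C) X) X coll_lambda)" by (rule genuine_iff)
qed

end
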